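(* There exist two non-isomorphic simple graphs $G_1$ and $G_2$, each on $8$ vertices, such that $P(G_1;x,\lambda)=P(G_2;x,\lambda)$. Consequently, the bivariate permanent polynomial is not a graph characterising polynomial.
   Context: All graphs are finite, simple and undirected. For a graph $G$ on $n$ vertices, let $A$ be its adjacency matrix and $\bar A$ the adjacency matrix of its complement $\bar G$, both with respect to the same vertex ordering. The permanent of an $n\times n$ matrix $M=(m_{ij})$ is $\mathrm{per}(M)=\sum_{\sigma\in S_n}\prod_{i=1}^n m_{i\sigma(i)}$. The bivariate permanent polynomial of $G$ is $P(G;x,\lambda)=\mathrm{per}(xI_n+\lambda A+\bar A)\in\mathbb{Z}[x,\lambda]$, where $I_n$ is the $n\times n$ identity matrix. A graph polynomial is called graph characterising if any two graphs with the same polynomial are isomorphic. *)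

theory Defs
  imports "HOL-Combinatorics.Permutations" "HOL-Computational_Algebra.Polynomial"
begin

definition simple_graph :: "nat \<Rightarrow> (nat \<Rightarrow> nat \<Rightarrow> bool) \<Rightarrow> bool" where
  "simple_graph n E \<longleftrightarrow>
     (\<forall>i j. E i j \<longrightarrow> i < n \<and> j < n) \<and>
     (\<forall>i j. E i j \<longrightarrow> E j i) \<and>
     (\<forall>i. \<not> E i i)"

definition graph_iso :: "nat \<Rightarrow> (nat \<Rightarrow> nat \<Rightarrow> bool) \<Rightarrow> (nat \<Rightarrow> nat \<Rightarrow> bool) \<Rightarrow> bool" where
  "graph_iso n E1 E2 \<longleftrightarrow>
     (\<exists>f. bij_betw f {..<n} {..<n} \<and>
          (\<forall>i<n. \<forall>j<n. E1 i j \<longleftrightarrow> E2 (f i) (f j)))"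

definition per :: "nat \<Rightarrow> (nat \<Rightarrow> nat \<Rightarrow> 'a::comm_semiring_1) \<Rightarrow> 'a" where
  "per n M = (\<Sum>\<sigma>\<in>{\<sigma>. \<sigma> permutes {..<n}}. \<Prod>i<n. M i (\<sigma> i))"

text \<open>Bivariate polynomials Z[x,lambda] are represented as int poly poly:
  polynomials in lambda (outer) with coefficients in Z[x] (inner).\<close>
definition var_x :: "int poly poly" where "var_x = [:[:0, 1:]:]"
definition var_lambda :: "int poly poly" where "var_lambda = [:0, 1:]"

definition ind :: "bool \<Rightarrow> int poly poly" where "ind b = (if b then 1 else 0)"

definition perm_poly :: "nat \<Rightarrow> (nat \<Rightarrow> nat \<Rightarrow> bool) \<Rightarrow> int poly poly" where
  "perm_poly n E = per n (\<lambda>i j. var_x * ind (i = j) + var_lambda * ind (E i j)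
                                 + ind (i \<noteq> j \<and> \<not> E i j))"

end

theory Submission imports Defs "HOL-Combinatorics.Multiset_Permutations" begin

definition hh :: "(nat \<Rightarrow> nat \<Rightarrow> 'a::comm_semiring_1) \<Rightarrow> nat \<Rightarrow> nat set \<Rightarrow> 'a" where
  "hh M off C = (\<Sum>xs\<in>permutations_of_set C. \<Prod>i<length xs. M (off+i) (xs!i))"

lemma hh_empty: "hh M off {} = 1"
  by (simp add: hh_def)

lemma hh_rec:
  assumes "finite C" "C \<noteq> {}"
  shows "hh M off C = (\<Sum>c\<in>C. M off c * hh M (Suc off) (C - {c}))"
proof -
  have "hh M off C = (\<Sum>xs\<in>(\<Union>c\<in>C. (\<lambda>xs. c # xs) ` permutations_of_set (C - {c})). \<Prod>i<length xs. M (off+i) (xs!i))"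
    unfolding hh_def using permutations_of_set_nonempty[OF assms(2)] by simp
  also have "\<dots> = (\<Sum>c\<in>C. \<Sum>xs\<in>(\<lambda>xs. c # xs) ` permutations_of_set (C - {c}). \<Prod>i<length xs. M (off+i) (xs!i))"
    by (rule sum.UNION_disjoint) (auto simp: assms)
  also have "\<dots> = (\<Sum>c\<in>C. M off c * hh M (Suc off) (C - {c}))"
  proof (rule sum.cong[OF refl])
    fix c assume "c \<in> C"
    have "(\<Sum>xs\<in>(\<lambda>xs. c # xs) ` permutations_of_set (C - {c}). \<Prod>i<length xs. M (off+i) (xs!i))
        = (\<Sum>ys\<in>permutations_of_set (C - {c}). \<Prod>i<Suc (length ys). M (off+i) ((c#ys)!i))"
      by (subst sum.reindex) (auto simp: inj_on_def)
    also have "\<dots> = (\<Sum>ys\<in>permutations_of_set (C - {c}). M off c * (\<Prod>i<length ys. M (Suc off+i) (ys!i)))"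
      by (rule sum.cong[OF refl], subst prod.lessThan_Suc_shift) simp
    also have "\<dots> = M off c * hh M (Suc off) (C - {c})"
      by (simp add: hh_def sum_distrib_left)
    finally show "(\<Sum>xs\<in>(\<lambda>xs. c # xs) ` permutations_of_set (C - {c}). \<Prod>i<length xs. M (off+i) (xs!i))
        = M off c * hh M (Suc off) (C - {c})" .
  qed
  finally show ?thesis .
qed

lemma per_hh: "per n M = hh M 0 {..<n}"
proof -
  have "per n M = (\<Sum>xs\<in>permutations_of_set {..<n}. \<Prod>i<n. M i (xs!i))"
    unfolding per_def
  proof (rule sum.reindex_bij_witness[where i="\<lambda>xs i. if i < n then xs!i else i" and j="\<lambda>\<sigma>. map \<sigma> [0..<n]"])
    fix \<sigma> assume "\<sigma> \<in> {\<sigma>. \<sigma> permutes {..<n}}"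
    then have p: "\<sigma> permutes {..<n}" by simp
    show "(\<lambda>i. if i < n then map \<sigma> [0..<n] ! i else i) = \<sigma>"
      using permutes_not_in[OF p] by (auto simp: fun_eq_iff)
    have "set (map \<sigma> [0..<n]) = {..<n}"
      using permutes_image[OF p] by (simp add: atLeast0LessThan)
    moreover have "distinct (map \<sigma> [0..<n])"
      using permutes_inj_on[OF p] by (simp add: distinct_map inj_on_subset atLeast0LessThan)
    ultimately show "map \<sigma> [0..<n] \<in> permutations_of_set {..<n}" by auto
    show "(\<Prod>i<n. M i (map \<sigma> [0..<n] ! i)) = (\<Prod>i<n. M i (\<sigma> i))"
      by (rule prod.cong) auto
  next
    fix xs assume xs: "xs \<in> permutations_of_set {..<n}"
    have len: "length xs = n" using length_finite_permutations_of_set[OF xs] by simp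
    have st: "set xs = {..<n}" and d: "distinct xs" using permutations_of_setD[OF xs] by auto
    show "map (\<lambda>i. if i < n then xs!i else i) [0..<n] = xs"
      by (rule nth_equalityI) (auto simp: len)
    show "(\<lambda>i. if i < n then xs!i else i) \<in> {\<sigma>. \<sigma> permutes {..<n}}"
    proof -
      have "bij_betw (\<lambda>i. if i < n then xs!i else i) {..<n} {..<n}"
      proof (rule bij_betw_imageI)
        show "inj_on (\<lambda>i. if i < n then xs!i else i) {..<n}"
          using d len by (auto simp: inj_on_def nth_eq_iff_index_eq)
        show "(\<lambda>i. if i < n then xs!i else i) ` {..<n} = {..<n}"
        proof -
          have "(\<lambda>i. if i < n then xs!i else i) ` {..<n} = (\<lambda>i. xs!i) ` {..<n}" by auto
          also have "\<dots> = set xs" using len by (auto simp: set_conv_nth)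
          finally show ?thesis using st by simp
        qed
      qed
      then show ?thesis by (auto intro!: bij_imp_permutes split: if_splits)
    qed
  qed
  also have "\<dots> = hh M 0 {..<n}"
    unfolding hh_def by (rule sum.cong[OF refl]) (simp add: length_finite_permutations_of_set)
  finally show ?thesis .
qed
definition E1 :: "nat \<Rightarrow> nat \<Rightarrow> bool" where
  "E1 i j \<longleftrightarrow> (i,j) \<in> {(0,3),(0,5),(0,6),(0,7),(1,4),(1,5),(1,7),(2,5),(2,6),(2,7),(3,6),(4,6),(5,7),(6,7)} \<or> (j,i) \<in> {(0,3),(0,5),(0,6),(0,7),(1,4),(1,5),(1,7),(2,5),(2,6),(2,7),(3,6),(4,6),(5,7),(6,7)}"

definition E2 :: "nat \<Rightarrow> nat \<Rightarrow> bool" where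
  "E2 i j \<longleftrightarrow> (i,j) \<in> {(0,3),(0,5),(0,6),(0,7),(1,4),(1,5),(1,6),(2,5),(2,6),(3,6),(3,7),(4,7),(5,6),(5,7)} \<or> (j,i) \<in> {(0,3),(0,5),(0,6),(0,7),(1,4),(1,5),(1,6),(2,5),(2,6),(3,6),(3,7),(4,7),(5,6),(5,7)}"

definition M1 :: "nat \<Rightarrow> nat \<Rightarrow> int poly poly" where
  "M1 = (\<lambda>i j. var_x * ind (i = j) + var_lambda * ind (E1 i j) + ind (i \<noteq> j \<and> \<not> E1 i j))"

lemma M1_simp: "M1 i j = var_x * ind (i = j) + var_lambda * ind (E1 i j) + ind (i \<noteq> j \<and> \<not> E1 i j)"
  by (simp add: M1_def)

definition M2 :: "nat \<Rightarrow> nat \<Rightarrow> int poly poly" where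
  "M2 = (\<lambda>i j. var_x * ind (i = j) + var_lambda * ind (E2 i j) + ind (i \<noteq> j \<and> \<not> E2 i j))"

lemma M2_simp: "M2 i j = var_x * ind (i = j) + var_lambda * ind (E2 i j) + ind (i \<noteq> j \<and> \<not> E2 i j)"
  by (simp add: M2_def)

lemma two_eq: "Suc (Suc 0) = 2" by simp

lemmas comp_simps = two_eq hh_empty one_pCons ind_def var_x_def var_lambda_def insert_Diff_if E1_def E2_def M1_simp M2_simp

lemma M1_0[simp]: "hh M1 (7) {0} = [:0, [:1:]:]"
  by (subst hh_rec) (simp_all add: comp_simps)
lemma M1_1[simp]: "hh M1 (7) {Suc 0} = [:0, [:1:]:]"
  by (subst hh_rec) (simp_all add: comp_simps)
lemma M1_2[simp]: "hh M1 (7) {2} = [:0, [:1:]:]"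
  by (subst hh_rec) (simp_all add: comp_simps)
lemma M1_3[simp]: "hh M1 (7) {3} = [:[:1:]:]"
  by (subst hh_rec) (simp_all add: comp_simps)
lemma M1_4[simp]: "hh M1 (7) {4} = [:[:1:]:]"
  by (subst hh_rec) (simp_all add: comp_simps)
lemma M1_5[simp]: "hh M1 (7) {5} = [:0, [:1:]:]"
  by (subst hh_rec) (simp_all add: comp_simps)
lemma M1_6[simp]: "hh M1 (7) {6} = [:0, [:1:]:]"
  by (subst hh_rec) (simp_all add: comp_simps)
lemma M1_7[simp]: "hh M1 (7) {7} = [:[:0, 1:]:]"
  by (subst hh_rec) (simp_all add: comp_simps)
lemma M1_0_1[simp]: "hh M1 (6) {0, Suc 0} = [:0, [:1:], [:1:]:]"
  by (subst hh_rec) (simp_all add: comp_simps)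
lemma M1_0_2[simp]: "hh M1 (6) {0, 2} = [:0, 0, [:2:]:]"
  by (subst hh_rec) (simp_all add: comp_simps)
lemma M1_0_3[simp]: "hh M1 (6) {0, 3} = [:0, [:1:], [:1:]:]"
  by (subst hh_rec) (simp_all add: comp_simps)
lemma M1_0_4[simp]: "hh M1 (6) {0, 4} = [:0, [:1:], [:1:]:]"
  by (subst hh_rec) (simp_all add: comp_simps)
lemma M1_0_5[simp]: "hh M1 (6) {0, 5} = [:0, [:1:], [:1:]:]"
  by (subst hh_rec) (simp_all add: comp_simps)
lemma M1_0_6[simp]: "hh M1 (6) {0, 6} = [:0, [:0, 1:], [:1:]:]"
  by (subst hh_rec) (simp_all add: comp_simps)
lemma M1_0_7[simp]: "hh M1 (6) {0, 7} = [:0, [:0, 1:], [:1:]:]"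
  by (subst hh_rec) (simp_all add: comp_simps)
lemma M1_1_2[simp]: "hh M1 (6) {Suc 0, 2} = [:0, [:1:], [:1:]:]"
  by (subst hh_rec) (simp_all add: comp_simps)
lemma M1_1_3[simp]: "hh M1 (6) {Suc 0, 3} = [:[:1:], 0, [:1:]:]"
  by (subst hh_rec) (simp_all add: comp_simps)
lemma M1_1_4[simp]: "hh M1 (6) {Suc 0, 4} = [:[:1:], 0, [:1:]:]"
  by (subst hh_rec) (simp_all add: comp_simps)
lemma M1_1_5[simp]: "hh M1 (6) {Suc 0, 5} = [:0, [:2:]:]"
  by (subst hh_rec) (simp_all add: comp_simps)
lemma M1_1_6[simp]: "hh M1 (6) {Suc 0, 6} = [:0, [:1, 1:]:]"
  by (subst hh_rec) (simp_all add: comp_simps)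
lemma M1_1_7[simp]: "hh M1 (6) {Suc 0, 7} = [:[:0, 1:], 0, [:1:]:]"
  by (subst hh_rec) (simp_all add: comp_simps)
lemma M1_2_3[simp]: "hh M1 (6) {2, 3} = [:0, [:1:], [:1:]:]"
  by (subst hh_rec) (simp_all add: comp_simps)
lemma M1_2_4[simp]: "hh M1 (6) {2, 4} = [:0, [:1:], [:1:]:]"
  by (subst hh_rec) (simp_all add: comp_simps)
lemma M1_2_5[simp]: "hh M1 (6) {2, 5} = [:0, [:1:], [:1:]:]"
  by (subst hh_rec) (simp_all add: comp_simps)
lemma M1_2_6[simp]: "hh M1 (6) {2, 6} = [:0, [:0, 1:], [:1:]:]"
  by (subst hh_rec) (simp_all add: comp_simps)
lemma M1_2_7[simp]: "hh M1 (6) {2, 7} = [:0, [:0, 1:], [:1:]:]"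
  by (subst hh_rec) (simp_all add: comp_simps)
lemma M1_3_4[simp]: "hh M1 (6) {3, 4} = [:0, [:2:]:]"
  by (subst hh_rec) (simp_all add: comp_simps)
lemma M1_3_5[simp]: "hh M1 (6) {3, 5} = [:[:1:], 0, [:1:]:]"
  by (subst hh_rec) (simp_all add: comp_simps)
lemma M1_3_6[simp]: "hh M1 (6) {3, 6} = [:[:0, 1:], 0, [:1:]:]"
  by (subst hh_rec) (simp_all add: comp_simps)
lemma M1_3_7[simp]: "hh M1 (6) {3, 7} = [:0, [:1, 1:]:]"
  by (subst hh_rec) (simp_all add: comp_simps)
lemma M1_4_5[simp]: "hh M1 (6) {4, 5} = [:[:1:], 0, [:1:]:]"
  by (subst hh_rec) (simp_all add: comp_simps)
lemma M1_4_6[simp]: "hh M1 (6) {4, 6} = [:[:0, 1:], 0, [:1:]:]"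
  by (subst hh_rec) (simp_all add: comp_simps)
lemma M1_4_7[simp]: "hh M1 (6) {4, 7} = [:0, [:1, 1:]:]"
  by (subst hh_rec) (simp_all add: comp_simps)
lemma M1_5_6[simp]: "hh M1 (6) {5, 6} = [:0, [:1, 1:]:]"
  by (subst hh_rec) (simp_all add: comp_simps)
lemma M1_5_7[simp]: "hh M1 (6) {5, 7} = [:[:0, 1:], 0, [:1:]:]"
  by (subst hh_rec) (simp_all add: comp_simps)
lemma M1_6_7[simp]: "hh M1 (6) {6, 7} = [:[:0, 0, 1:], 0, [:1:]:]"
  by (subst hh_rec) (simp_all add: comp_simps)
lemma M1_0_1_2[simp]: "hh M1 (5) {0, Suc 0, 2} = [:0, 0, [:2:], [:4:]:]"
  by (subst hh_rec) (simp_all add: comp_simps)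
lemma M1_0_1_3[simp]: "hh M1 (5) {0, Suc 0, 3} = [:0, [:2:], [:2:], [:2:]:]"
  by (subst hh_rec) (simp_all add: comp_simps)
lemma M1_0_1_4[simp]: "hh M1 (5) {0, Suc 0, 4} = [:0, [:2:], [:2:], [:2:]:]"
  by (subst hh_rec) (simp_all add: comp_simps)
lemma M1_0_1_5[simp]: "hh M1 (5) {0, Suc 0, 5} = [:0, [:0, 1:], [:3, 1:], [:1:]:]"
  by (subst hh_rec) (simp_all add: comp_simps)
lemma M1_0_1_6[simp]: "hh M1 (5) {0, Suc 0, 6} = [:0, [:1:], [:2, 2:], [:1:]:]"
  by (subst hh_rec) (simp_all add: comp_simps)
lemma M1_0_1_7[simp]: "hh M1 (5) {0, Suc 0, 7} = [:0, [:0, 1:], [:1, 1:], [:3:]:]"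
  by (subst hh_rec) (simp_all add: comp_simps)
lemma M1_0_2_3[simp]: "hh M1 (5) {0, 2, 3} = [:0, 0, [:4:], [:2:]:]"
  by (subst hh_rec) (simp_all add: comp_simps)
lemma M1_0_2_4[simp]: "hh M1 (5) {0, 2, 4} = [:0, 0, [:4:], [:2:]:]"
  by (subst hh_rec) (simp_all add: comp_simps)
lemma M1_0_2_5[simp]: "hh M1 (5) {0, 2, 5} = [:0, 0, [:2, 2:], [:2:]:]"
  by (subst hh_rec) (simp_all add: comp_simps)
lemma M1_0_2_6[simp]: "hh M1 (5) {0, 2, 6} = [:0, 0, [:2, 2:], [:2:]:]"
  by (subst hh_rec) (simp_all add: comp_simps)
lemma M1_0_2_7[simp]: "hh M1 (5) {0, 2, 7} = [:0, 0, [:0, 2:], [:4:]:]"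
  by (subst hh_rec) (simp_all add: comp_simps)
lemma M1_0_3_4[simp]: "hh M1 (5) {0, 3, 4} = [:0, [:2:], [:4:]:]"
  by (subst hh_rec) (simp_all add: comp_simps)
lemma M1_0_3_5[simp]: "hh M1 (5) {0, 3, 5} = [:0, [:2, 1:], [:1, 1:], [:1:]:]"
  by (subst hh_rec) (simp_all add: comp_simps)
lemma M1_0_3_6[simp]: "hh M1 (5) {0, 3, 6} = [:0, [:1, 2:], [:2:], [:1:]:]"
  by (subst hh_rec) (simp_all add: comp_simps)
lemma M1_0_3_7[simp]: "hh M1 (5) {0, 3, 7} = [:0, [:0, 1:], [:3, 1:], [:1:]:]"
  by (subst hh_rec) (simp_all add: comp_simps)
lemma M1_0_4_5[simp]: "hh M1 (5) {0, 4, 5} = [:0, [:2, 1:], [:1, 1:], [:1:]:]"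
  by (subst hh_rec) (simp_all add: comp_simps)
lemma M1_0_4_6[simp]: "hh M1 (5) {0, 4, 6} = [:0, [:1, 2:], [:2:], [:1:]:]"
  by (subst hh_rec) (simp_all add: comp_simps)
lemma M1_0_4_7[simp]: "hh M1 (5) {0, 4, 7} = [:0, [:0, 1:], [:3, 1:], [:1:]:]"
  by (subst hh_rec) (simp_all add: comp_simps)
lemma M1_0_5_6[simp]: "hh M1 (5) {0, 5, 6} = [:0, [:1, 0, 1:], [:2, 2:]:]"
  by (subst hh_rec) (simp_all add: comp_simps)
lemma M1_0_5_7[simp]: "hh M1 (5) {0, 5, 7} = [:0, [:0, 1, 1:], [:1, 1:], [:2:]:]"
  by (subst hh_rec) (simp_all add: comp_simps)
lemma M1_0_6_7[simp]: "hh M1 (5) {0, 6, 7} = [:0, [:0, 1, 1:], [:1, 1:], [:2:]:]"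
  by (subst hh_rec) (simp_all add: comp_simps)
lemma M1_1_2_3[simp]: "hh M1 (5) {Suc 0, 2, 3} = [:0, [:2:], [:2:], [:2:]:]"
  by (subst hh_rec) (simp_all add: comp_simps)
lemma M1_1_2_4[simp]: "hh M1 (5) {Suc 0, 2, 4} = [:0, [:2:], [:2:], [:2:]:]"
  by (subst hh_rec) (simp_all add: comp_simps)
lemma M1_1_2_5[simp]: "hh M1 (5) {Suc 0, 2, 5} = [:0, [:0, 1:], [:3, 1:], [:1:]:]"
  by (subst hh_rec) (simp_all add: comp_simps)
lemma M1_1_2_6[simp]: "hh M1 (5) {Suc 0, 2, 6} = [:0, [:1:], [:2, 2:], [:1:]:]"
  by (subst hh_rec) (simp_all add: comp_simps)
lemma M1_1_2_7[simp]: "hh M1 (5) {Suc 0, 2, 7} = [:0, [:0, 1:], [:1, 1:], [:3:]:]"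
  by (subst hh_rec) (simp_all add: comp_simps)
lemma M1_1_3_4[simp]: "hh M1 (5) {Suc 0, 3, 4} = [:[:2:], 0, [:4:]:]"
  by (subst hh_rec) (simp_all add: comp_simps)
lemma M1_1_3_5[simp]: "hh M1 (5) {Suc 0, 3, 5} = [:[:0, 1:], [:3:], [:0, 1:], [:1:]:]"
  by (subst hh_rec) (simp_all add: comp_simps)
lemma M1_1_3_6[simp]: "hh M1 (5) {Suc 0, 3, 6} = [:[:1:], [:1, 2:], [:1:], [:1:]:]"
  by (subst hh_rec) (simp_all add: comp_simps)
lemma M1_1_3_7[simp]: "hh M1 (5) {Suc 0, 3, 7} = [:[:0, 1:], [:1:], [:2, 1:], [:1:]:]"
  by (subst hh_rec) (simp_all add: comp_simps)
lemma M1_1_4_5[simp]: "hh M1 (5) {Suc 0, 4, 5} = [:[:0, 1:], [:3:], [:0, 1:], [:1:]:]"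
  by (subst hh_rec) (simp_all add: comp_simps)
lemma M1_1_4_6[simp]: "hh M1 (5) {Suc 0, 4, 6} = [:[:1:], [:1, 2:], [:1:], [:1:]:]"
  by (subst hh_rec) (simp_all add: comp_simps)
lemma M1_1_4_7[simp]: "hh M1 (5) {Suc 0, 4, 7} = [:[:0, 1:], [:1:], [:2, 1:], [:1:]:]"
  by (subst hh_rec) (simp_all add: comp_simps)
lemma M1_1_5_6[simp]: "hh M1 (5) {Suc 0, 5, 6} = [:0, [:2, 1, 1:], [:1, 1:]:]"
  by (subst hh_rec) (simp_all add: comp_simps)
lemma M1_1_5_7[simp]: "hh M1 (5) {Suc 0, 5, 7} = [:[:0, 0, 1:], [:0, 1:], [:2, 1:], [:1:]:]"
  by (subst hh_rec) (simp_all add: comp_simps)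
lemma M1_1_6_7[simp]: "hh M1 (5) {Suc 0, 6, 7} = [:[:0, 1:], [:0, 0, 1:], [:2, 1:], [:1:]:]"
  by (subst hh_rec) (simp_all add: comp_simps)
lemma M1_2_3_4[simp]: "hh M1 (5) {2, 3, 4} = [:0, [:2:], [:4:]:]"
  by (subst hh_rec) (simp_all add: comp_simps)
lemma M1_2_3_5[simp]: "hh M1 (5) {2, 3, 5} = [:0, [:2, 1:], [:1, 1:], [:1:]:]"
  by (subst hh_rec) (simp_all add: comp_simps)
lemma M1_2_3_6[simp]: "hh M1 (5) {2, 3, 6} = [:0, [:1, 2:], [:2:], [:1:]:]"
  by (subst hh_rec) (simp_all add: comp_simps)
lemma M1_2_3_7[simp]: "hh M1 (5) {2, 3, 7} = [:0, [:0, 1:], [:3, 1:], [:1:]:]"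
  by (subst hh_rec) (simp_all add: comp_simps)
lemma M1_2_4_5[simp]: "hh M1 (5) {2, 4, 5} = [:0, [:2, 1:], [:1, 1:], [:1:]:]"
  by (subst hh_rec) (simp_all add: comp_simps)
lemma M1_2_4_6[simp]: "hh M1 (5) {2, 4, 6} = [:0, [:1, 2:], [:2:], [:1:]:]"
  by (subst hh_rec) (simp_all add: comp_simps)
lemma M1_2_4_7[simp]: "hh M1 (5) {2, 4, 7} = [:0, [:0, 1:], [:3, 1:], [:1:]:]"
  by (subst hh_rec) (simp_all add: comp_simps)
lemma M1_2_5_6[simp]: "hh M1 (5) {2, 5, 6} = [:0, [:1, 0, 1:], [:2, 2:]:]"
  by (subst hh_rec) (simp_all add: comp_simps)
lemma M1_2_5_7[simp]: "hh M1 (5) {2, 5, 7} = [:0, [:0, 1, 1:], [:1, 1:], [:2:]:]"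
  by (subst hh_rec) (simp_all add: comp_simps)
lemma M1_2_6_7[simp]: "hh M1 (5) {2, 6, 7} = [:0, [:0, 1, 1:], [:1, 1:], [:2:]:]"
  by (subst hh_rec) (simp_all add: comp_simps)
lemma M1_3_4_5[simp]: "hh M1 (5) {3, 4, 5} = [:[:2:], [:0, 2:], [:2:]:]"
  by (subst hh_rec) (simp_all add: comp_simps)
lemma M1_3_4_6[simp]: "hh M1 (5) {3, 4, 6} = [:[:0, 2:], [:2:], [:2:]:]"
  by (subst hh_rec) (simp_all add: comp_simps)
lemma M1_3_4_7[simp]: "hh M1 (5) {3, 4, 7} = [:0, [:2, 2:], [:2:]:]"
  by (subst hh_rec) (simp_all add: comp_simps)
lemma M1_3_5_6[simp]: "hh M1 (5) {3, 5, 6} = [:[:1, 0, 1:], [:1, 1:], [:1, 1:]:]"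
  by (subst hh_rec) (simp_all add: comp_simps)
lemma M1_3_5_7[simp]: "hh M1 (5) {3, 5, 7} = [:[:0, 1:], [:1, 1, 1:], [:1:], [:1:]:]"
  by (subst hh_rec) (simp_all add: comp_simps)
lemma M1_3_6_7[simp]: "hh M1 (5) {3, 6, 7} = [:[:0, 0, 1:], [:1, 2:], [:1:], [:1:]:]"
  by (subst hh_rec) (simp_all add: comp_simps)
lemma M1_4_5_6[simp]: "hh M1 (5) {4, 5, 6} = [:[:1, 0, 1:], [:1, 1:], [:1, 1:]:]"
  by (subst hh_rec) (simp_all add: comp_simps)
lemma M1_4_5_7[simp]: "hh M1 (5) {4, 5, 7} = [:[:0, 1:], [:1, 1, 1:], [:1:], [:1:]:]"
  by (subst hh_rec) (simp_all add: comp_simps)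
lemma M1_4_6_7[simp]: "hh M1 (5) {4, 6, 7} = [:[:0, 0, 1:], [:1, 2:], [:1:], [:1:]:]"
  by (subst hh_rec) (simp_all add: comp_simps)
lemma M1_5_6_7[simp]: "hh M1 (5) {5, 6, 7} = [:[:0, 1, 0, 1:], 0, [:2, 2:]:]"
  by (subst hh_rec) (simp_all add: comp_simps)
lemma M1_0_1_2_3[simp]: "hh M1 (4) {0, Suc 0, 2, 3} = [:0, [:4:], [:6:], [:12:], [:2:]:]"
  by (subst hh_rec) (simp_all add: comp_simps)
lemma M1_0_1_2_4[simp]: "hh M1 (4) {0, Suc 0, 2, 4} = [:0, [:4:], [:4, 2:], [:8, 4:], [:2:]:]"
  by (subst hh_rec) (simp_all add: comp_simps)
lemma M1_0_1_2_5[simp]: "hh M1 (4) {0, Suc 0, 2, 5} = [:0, [:0, 2:], [:8, 2:], [:8, 2:], [:2:]:]"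
  by (subst hh_rec) (simp_all add: comp_simps)
lemma M1_0_1_2_6[simp]: "hh M1 (4) {0, Suc 0, 2, 6} = [:0, [:2:], [:4, 4:], [:6, 2:], [:6:]:]"
  by (subst hh_rec) (simp_all add: comp_simps)
lemma M1_0_1_2_7[simp]: "hh M1 (4) {0, Suc 0, 2, 7} = [:0, [:0, 2:], [:4, 2:], [:10, 2:], [:4:]:]"
  by (subst hh_rec) (simp_all add: comp_simps)
lemma M1_0_1_3_4[simp]: "hh M1 (4) {0, Suc 0, 3, 4} = [:[:2:], [:2, 2:], [:8, 2:], [:6, 2:]:]"
  by (subst hh_rec) (simp_all add: comp_simps)
lemma M1_0_1_3_5[simp]: "hh M1 (4) {0, Suc 0, 3, 5} = [:[:0, 1:], [:5, 1:], [:7, 3:], [:5, 1:], [:1:]:]"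
  by (subst hh_rec) (simp_all add: comp_simps)
lemma M1_0_1_3_6[simp]: "hh M1 (4) {0, Suc 0, 3, 6} = [:[:1:], [:2, 2:], [:6, 4:], [:6:], [:3:]:]"
  by (subst hh_rec) (simp_all add: comp_simps)
lemma M1_0_1_3_7[simp]: "hh M1 (4) {0, Suc 0, 3, 7} = [:[:0, 1:], [:3, 1:], [:5, 3:], [:9, 1:], [:1:]:]"
  by (subst hh_rec) (simp_all add: comp_simps)
lemma M1_0_1_4_5[simp]: "hh M1 (4) {0, Suc 0, 4, 5} = [:[:0, 1:], [:5, 0, 1:], [:4, 5, 1:], [:4, 2:], [:1:]:]"
  by (subst hh_rec) (simp_all add: comp_simps)
lemma M1_0_1_4_6[simp]: "hh M1 (4) {0, Suc 0, 4, 6} = [:[:1:], [:1, 3:], [:4, 4, 2:], [:5, 1:], [:3:]:]"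
  by (subst hh_rec) (simp_all add: comp_simps)
lemma M1_0_1_4_7[simp]: "hh M1 (4) {0, Suc 0, 4, 7} = [:[:0, 1:], [:3, 0, 1:], [:4, 3, 1:], [:6, 4:], [:1:]:]"
  by (subst hh_rec) (simp_all add: comp_simps)
lemma M1_0_1_5_6[simp]: "hh M1 (4) {0, Suc 0, 5, 6} = [:0, [:3, 1, 1:], [:4, 4, 1:], [:6, 3:], [:1:]:]"
  by (subst hh_rec) (simp_all add: comp_simps)
lemma M1_0_1_5_7[simp]: "hh M1 (4) {0, Suc 0, 5, 7} = [:[:0, 0, 1:], [:0, 3:], [:6, 4, 1:], [:6, 1:], [:2:]:]"
  by (subst hh_rec) (simp_all add: comp_simps)
lemma M1_0_1_6_7[simp]: "hh M1 (4) {0, Suc 0, 6, 7} = [:[:0, 1:], [:1, 0, 1:], [:4, 5, 1:], [:4, 2:], [:5:]:]"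
  by (subst hh_rec) (simp_all add: comp_simps)
lemma M1_0_2_3_4[simp]: "hh M1 (4) {0, 2, 3, 4} = [:0, [:4:], [:12, 4:], [:2, 2:]:]"
  by (subst hh_rec) (simp_all add: comp_simps)
lemma M1_0_2_3_5[simp]: "hh M1 (4) {0, 2, 3, 5} = [:0, [:4, 2:], [:8, 4:], [:6:]:]"
  by (subst hh_rec) (simp_all add: comp_simps)
lemma M1_0_2_3_6[simp]: "hh M1 (4) {0, 2, 3, 6} = [:0, [:2, 4:], [:6, 2:], [:8:], [:2:]:]"
  by (subst hh_rec) (simp_all add: comp_simps)
lemma M1_0_2_3_7[simp]: "hh M1 (4) {0, 2, 3, 7} = [:0, [:0, 2:], [:10, 4:], [:8:]:]"
  by (subst hh_rec) (simp_all add: comp_simps)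
lemma M1_0_2_4_5[simp]: "hh M1 (4) {0, 2, 4, 5} = [:0, [:4, 2:], [:6, 4, 2:], [:4, 2:]:]"
  by (subst hh_rec) (simp_all add: comp_simps)
lemma M1_0_2_4_6[simp]: "hh M1 (4) {0, 2, 4, 6} = [:0, [:2, 4:], [:4, 2, 2:], [:6, 2:], [:2:]:]"
  by (subst hh_rec) (simp_all add: comp_simps)
lemma M1_0_2_4_7[simp]: "hh M1 (4) {0, 2, 4, 7} = [:0, [:0, 2:], [:10, 2, 2:], [:4, 4:]:]"
  by (subst hh_rec) (simp_all add: comp_simps)
lemma M1_0_2_5_6[simp]: "hh M1 (4) {0, 2, 5, 6} = [:0, [:2, 0, 2:], [:6, 6:], [:4, 2:], [:2:]:]"
  by (subst hh_rec) (simp_all add: comp_simps)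
lemma M1_0_2_5_7[simp]: "hh M1 (4) {0, 2, 5, 7} = [:0, [:0, 2, 2:], [:4, 6:], [:10:]:]"
  by (subst hh_rec) (simp_all add: comp_simps)
lemma M1_0_2_6_7[simp]: "hh M1 (4) {0, 2, 6, 7} = [:0, [:0, 2, 2:], [:4, 4:], [:6, 2:], [:4:]:]"
  by (subst hh_rec) (simp_all add: comp_simps)
lemma M1_0_3_4_5[simp]: "hh M1 (4) {0, 3, 4, 5} = [:[:2:], [:4, 5, 1:], [:7, 2, 1:], [:1, 1:]:]"
  by (subst hh_rec) (simp_all add: comp_simps)
lemma M1_0_3_4_6[simp]: "hh M1 (4) {0, 3, 4, 6} = [:[:0, 2:], [:3, 3, 2:], [:6, 2:], [:5, 1:]:]"
  by (subst hh_rec) (simp_all add: comp_simps)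
lemma M1_0_3_4_7[simp]: "hh M1 (4) {0, 3, 4, 7} = [:0, [:4, 3, 1:], [:9, 4, 1:], [:1, 1:]:]"
  by (subst hh_rec) (simp_all add: comp_simps)
lemma M1_0_3_5_6[simp]: "hh M1 (4) {0, 3, 5, 6} = [:[:1, 0, 1:], [:3, 3, 1:], [:7, 4:], [:2, 1:], [:1:]:]"
  by (subst hh_rec) (simp_all add: comp_simps)
lemma M1_0_3_5_7[simp]: "hh M1 (4) {0, 3, 5, 7} = [:[:0, 1:], [:3, 4, 2:], [:6, 3:], [:5:]:]"
  by (subst hh_rec) (simp_all add: comp_simps)
lemma M1_0_3_6_7[simp]: "hh M1 (4) {0, 3, 6, 7} = [:[:0, 0, 1:], [:2, 5, 1:], [:4, 2:], [:7, 1:], [:1:]:]"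
  by (subst hh_rec) (simp_all add: comp_simps)
lemma M1_0_4_5_6[simp]: "hh M1 (4) {0, 4, 5, 6} = [:[:1, 0, 1:], [:2, 4, 0, 1:], [:5, 4, 2:], [:2, 1:], [:1:]:]"
  by (subst hh_rec) (simp_all add: comp_simps)
lemma M1_0_4_5_7[simp]: "hh M1 (4) {0, 4, 5, 7} = [:[:0, 1:], [:3, 3, 2, 1:], [:5, 3, 1:], [:3, 2:]:]"
  by (subst hh_rec) (simp_all add: comp_simps)
lemma M1_0_4_6_7[simp]: "hh M1 (4) {0, 4, 6, 7} = [:[:0, 0, 1:], [:2, 4, 1, 1:], [:3, 2, 1:], [:5, 3:], [:1:]:]"
  by (subst hh_rec) (simp_all add: comp_simps)
lemma M1_0_5_6_7[simp]: "hh M1 (4) {0, 5, 6, 7} = [:[:0, 1, 0, 1:], [:1, 1, 2:], [:5, 6, 1:], [:3, 1:], [:2:]:]"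
  by (subst hh_rec) (simp_all add: comp_simps)
lemma M1_1_2_3_4[simp]: "hh M1 (4) {Suc 0, 2, 3, 4} = [:[:2:], [:2, 2:], [:8, 2:], [:6, 2:]:]"
  by (subst hh_rec) (simp_all add: comp_simps)
lemma M1_1_2_3_5[simp]: "hh M1 (4) {Suc 0, 2, 3, 5} = [:[:0, 1:], [:5, 1:], [:7, 3:], [:5, 1:], [:1:]:]"
  by (subst hh_rec) (simp_all add: comp_simps)
lemma M1_1_2_3_6[simp]: "hh M1 (4) {Suc 0, 2, 3, 6} = [:[:1:], [:2, 2:], [:6, 4:], [:6:], [:3:]:]"
  by (subst hh_rec) (simp_all add: comp_simps)
lemma M1_1_2_3_7[simp]: "hh M1 (4) {Suc 0, 2, 3, 7} = [:[:0, 1:], [:3, 1:], [:5, 3:], [:9, 1:], [:1:]:]"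
  by (subst hh_rec) (simp_all add: comp_simps)
lemma M1_1_2_4_5[simp]: "hh M1 (4) {Suc 0, 2, 4, 5} = [:[:0, 1:], [:5, 0, 1:], [:4, 5, 1:], [:4, 2:], [:1:]:]"
  by (subst hh_rec) (simp_all add: comp_simps)
lemma M1_1_2_4_6[simp]: "hh M1 (4) {Suc 0, 2, 4, 6} = [:[:1:], [:1, 3:], [:4, 4, 2:], [:5, 1:], [:3:]:]"
  by (subst hh_rec) (simp_all add: comp_simps)
lemma M1_1_2_4_7[simp]: "hh M1 (4) {Suc 0, 2, 4, 7} = [:[:0, 1:], [:3, 0, 1:], [:4, 3, 1:], [:6, 4:], [:1:]:]"
  by (subst hh_rec) (simp_all add: comp_simps)
lemma M1_1_2_5_6[simp]: "hh M1 (4) {Suc 0, 2, 5, 6} = [:0, [:3, 1, 1:], [:4, 4, 1:], [:6, 3:], [:1:]:]"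
  by (subst hh_rec) (simp_all add: comp_simps)
lemma M1_1_2_5_7[simp]: "hh M1 (4) {Suc 0, 2, 5, 7} = [:[:0, 0, 1:], [:0, 3:], [:6, 4, 1:], [:6, 1:], [:2:]:]"
  by (subst hh_rec) (simp_all add: comp_simps)
lemma M1_1_2_6_7[simp]: "hh M1 (4) {Suc 0, 2, 6, 7} = [:[:0, 1:], [:1, 0, 1:], [:4, 5, 1:], [:4, 2:], [:5:]:]"
  by (subst hh_rec) (simp_all add: comp_simps)
lemma M1_1_3_4_5[simp]: "hh M1 (4) {Suc 0, 3, 4, 5} = [:[:2, 1, 1:], [:5, 3:], [:4, 3, 1:], [:3, 1:]:]"
  by (subst hh_rec) (simp_all add: comp_simps)
lemma M1_1_3_4_6[simp]: "hh M1 (4) {Suc 0, 3, 4, 6} = [:[:1, 1:], [:3, 5, 2:], [:3, 1:], [:7, 1:]:]"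
  by (subst hh_rec) (simp_all add: comp_simps)
lemma M1_1_3_4_7[simp]: "hh M1 (4) {Suc 0, 3, 4, 7} = [:[:2, 1, 1:], [:1, 1:], [:8, 5, 1:], [:3, 1:]:]"
  by (subst hh_rec) (simp_all add: comp_simps)
lemma M1_1_3_5_6[simp]: "hh M1 (4) {Suc 0, 3, 5, 6} = [:[:1:], [:4, 4, 2:], [:6, 2:], [:2, 2:], [:1:]:]"
  by (subst hh_rec) (simp_all add: comp_simps)
lemma M1_1_3_5_7[simp]: "hh M1 (4) {Suc 0, 3, 5, 7} = [:[:0, 2, 1:], [:4, 2:], [:5, 4, 1:], [:4:], [:1:]:]"
  by (subst hh_rec) (simp_all add: comp_simps)
lemma M1_1_3_6_7[simp]: "hh M1 (4) {Suc 0, 3, 6, 7} = [:[:1, 1:], [:1, 3, 2:], [:5, 3:], [:5, 1:], [:2:]:]"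
  by (subst hh_rec) (simp_all add: comp_simps)
lemma M1_1_4_5_6[simp]: "hh M1 (4) {Suc 0, 4, 5, 6} = [:[:1:], [:2, 5, 2, 1:], [:5, 2, 1:], [:2, 2:], [:1:]:]"
  by (subst hh_rec) (simp_all add: comp_simps)
lemma M1_1_4_5_7[simp]: "hh M1 (4) {Suc 0, 4, 5, 7} = [:[:0, 2, 0, 1:], [:4, 1, 1:], [:3, 5, 2:], [:3, 1:], [:1:]:]"
  by (subst hh_rec) (simp_all add: comp_simps)
lemma M1_1_4_6_7[simp]: "hh M1 (4) {Suc 0, 4, 6, 7} = [:[:1, 0, 1:], [:1, 3, 1, 1:], [:3, 4, 1:], [:4, 2:], [:2:]:]"
  by (subst hh_rec) (simp_all add: comp_simps)
lemma M1_1_5_6_7[simp]: "hh M1 (4) {Suc 0, 5, 6, 7} = [:[:0, 1:], [:2, 2, 3, 1:], [:3, 3:], [:5, 3:], [:1:]:]"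
  by (subst hh_rec) (simp_all add: comp_simps)
lemma M1_2_3_4_5[simp]: "hh M1 (4) {2, 3, 4, 5} = [:[:2:], [:4, 5, 1:], [:7, 2, 1:], [:1, 1:]:]"
  by (subst hh_rec) (simp_all add: comp_simps)
lemma M1_2_3_4_6[simp]: "hh M1 (4) {2, 3, 4, 6} = [:[:0, 2:], [:3, 3, 2:], [:6, 2:], [:5, 1:]:]"
  by (subst hh_rec) (simp_all add: comp_simps)
lemma M1_2_3_4_7[simp]: "hh M1 (4) {2, 3, 4, 7} = [:0, [:4, 3, 1:], [:9, 4, 1:], [:1, 1:]:]"
  by (subst hh_rec) (simp_all add: comp_simps)
lemma M1_2_3_5_6[simp]: "hh M1 (4) {2, 3, 5, 6} = [:[:1, 0, 1:], [:3, 3, 1:], [:7, 4:], [:2, 1:], [:1:]:]"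
  by (subst hh_rec) (simp_all add: comp_simps)
lemma M1_2_3_5_7[simp]: "hh M1 (4) {2, 3, 5, 7} = [:[:0, 1:], [:3, 4, 2:], [:6, 3:], [:5:]:]"
  by (subst hh_rec) (simp_all add: comp_simps)
lemma M1_2_3_6_7[simp]: "hh M1 (4) {2, 3, 6, 7} = [:[:0, 0, 1:], [:2, 5, 1:], [:4, 2:], [:7, 1:], [:1:]:]"
  by (subst hh_rec) (simp_all add: comp_simps)
lemma M1_2_4_5_6[simp]: "hh M1 (4) {2, 4, 5, 6} = [:[:1, 0, 1:], [:2, 4, 0, 1:], [:5, 4, 2:], [:2, 1:], [:1:]:]"
  by (subst hh_rec) (simp_all add: comp_simps)
lemma M1_2_4_5_7[simp]: "hh M1 (4) {2, 4, 5, 7} = [:[:0, 1:], [:3, 3, 2, 1:], [:5, 3, 1:], [:3, 2:]:]"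
  by (subst hh_rec) (simp_all add: comp_simps)
lemma M1_2_4_6_7[simp]: "hh M1 (4) {2, 4, 6, 7} = [:[:0, 0, 1:], [:2, 4, 1, 1:], [:3, 2, 1:], [:5, 3:], [:1:]:]"
  by (subst hh_rec) (simp_all add: comp_simps)
lemma M1_2_5_6_7[simp]: "hh M1 (4) {2, 5, 6, 7} = [:[:0, 1, 0, 1:], [:1, 1, 2:], [:5, 6, 1:], [:3, 1:], [:2:]:]"
  by (subst hh_rec) (simp_all add: comp_simps)
lemma M1_3_4_5_6[simp]: "hh M1 (4) {3, 4, 5, 6} = [:[:1, 3, 1, 1:], [:5, 2, 1:], [:3, 4, 1:], [:2:]:]"
  by (subst hh_rec) (simp_all add: comp_simps)
lemma M1_3_4_5_7[simp]: "hh M1 (4) {3, 4, 5, 7} = [:[:2, 1, 1:], [:3, 6, 2, 1:], [:5, 1:], [:1, 1:]:]"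
  by (subst hh_rec) (simp_all add: comp_simps)
lemma M1_3_4_6_7[simp]: "hh M1 (4) {3, 4, 6, 7} = [:[:0, 2, 1, 1:], [:3, 3, 2:], [:5, 3:], [:3, 1:]:]"
  by (subst hh_rec) (simp_all add: comp_simps)
lemma M1_3_5_6_7[simp]: "hh M1 (4) {3, 5, 6, 7} = [:[:1, 1, 2, 1:], [:2, 4:], [:5, 4, 1:], [:2:], [:1:]:]"
  by (subst hh_rec) (simp_all add: comp_simps)
lemma M1_4_5_6_7[simp]: "hh M1 (4) {4, 5, 6, 7} = [:[:1, 0, 3, 0, 1:], [:2, 4:], [:3, 4, 3:], [:2:], [:1:]:]"
  by (subst hh_rec) (simp_all add: comp_simps)
lemma M1_0_1_2_3_4[simp]: "hh M1 (3) {0, Suc 0, 2, 3, 4} = [:[:2:], [:12, 6:], [:28, 12, 2:], [:28, 14, 4:], [:8, 4:]:]"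
  by (subst hh_rec) (simp_all add: comp_simps)
lemma M1_0_1_2_3_5[simp]: "hh M1 (3) {0, Suc 0, 2, 3, 5} = [:[:0, 1:], [:13, 4, 2:], [:26, 16, 2:], [:30, 12, 2:], [:8, 3:], [:1:]:]"
  by (subst hh_rec) (simp_all add: comp_simps)
lemma M1_0_1_2_3_6[simp]: "hh M1 (3) {0, Suc 0, 2, 3, 6} = [:[:1:], [:5, 8:], [:18, 12, 4:], [:26, 10, 2:], [:23, 6:], [:5:]:]"
  by (subst hh_rec) (simp_all add: comp_simps)
lemma M1_0_1_2_3_7[simp]: "hh M1 (3) {0, Suc 0, 2, 3, 7} = [:[:0, 1:], [:7, 4, 2:], [:24, 12, 2:], [:34, 14, 2:], [:12, 5:], [:1:]:]"
  by (subst hh_rec) (simp_all add: comp_simps)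
lemma M1_0_1_2_4_5[simp]: "hh M1 (3) {0, Suc 0, 2, 4, 5} = [:[:0, 1:], [:13, 5, 1:], [:27, 13, 4:], [:28, 15, 1:], [:9, 2:], [:1:]:]"
  by (subst hh_rec) (simp_all add: comp_simps)
lemma M1_0_1_2_4_6[simp]: "hh M1 (3) {0, Suc 0, 2, 4, 6} = [:[:1:], [:6, 7:], [:17, 13, 4:], [:25, 11, 2:], [:24, 5:], [:5:]:]"
  by (subst hh_rec) (simp_all add: comp_simps)
lemma M1_0_1_2_4_7[simp]: "hh M1 (3) {0, Suc 0, 2, 4, 7} = [:[:0, 1:], [:7, 5, 1:], [:25, 9, 4:], [:32, 17, 1:], [:13, 4:], [:1:]:]"
  by (subst hh_rec) (simp_all add: comp_simps)
lemma M1_0_1_2_5_6[simp]: "hh M1 (3) {0, Suc 0, 2, 5, 6} = [:0, [:7, 1, 3:], [:17, 17, 2:], [:28, 13, 1:], [:23, 5:], [:3:]:]"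
  by (subst hh_rec) (simp_all add: comp_simps)
lemma M1_0_1_2_5_7[simp]: "hh M1 (3) {0, Suc 0, 2, 5, 7} = [:[:0, 0, 1:], [:0, 9, 3:], [:22, 17, 1:], [:40, 9, 1:], [:14, 1:], [:2:]:]"
  by (subst hh_rec) (simp_all add: comp_simps)
lemma M1_0_1_2_6_7[simp]: "hh M1 (3) {0, Suc 0, 2, 6, 7} = [:[:0, 1:], [:3, 3, 3:], [:13, 15, 2:], [:24, 13, 1:], [:29, 4:], [:9:]:]"
  by (subst hh_rec) (simp_all add: comp_simps)
lemma M1_0_1_3_4_5[simp]: "hh M1 (3) {0, Suc 0, 3, 4, 5} = [:[:4, 1, 1:], [:13, 14, 2, 1:], [:27, 14, 6, 1:], [:16, 11, 3:], [:4, 2:]:]"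
  by (subst hh_rec) (simp_all add: comp_simps)
lemma M1_0_1_3_4_6[simp]: "hh M1 (3) {0, Suc 0, 3, 4, 6} = [:[:1, 3:], [:8, 7, 5:], [:17, 17, 6, 2:], [:22, 9, 1:], [:16, 6:]:]"
  by (subst hh_rec) (simp_all add: comp_simps)
lemma M1_0_1_3_4_7[simp]: "hh M1 (3) {0, Suc 0, 3, 4, 7} = [:[:2, 1, 1:], [:11, 10, 2, 1:], [:23, 14, 4, 1:], [:24, 15, 5:], [:4, 2:]:]"
  by (subst hh_rec) (simp_all add: comp_simps)
lemma M1_0_1_3_5_6[simp]: "hh M1 (3) {0, Suc 0, 3, 5, 6} = [:[:2, 0, 1:], [:6, 9, 2, 1:], [:22, 17, 6, 1:], [:21, 12, 3:], [:11, 4:], [:2:]:]"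
  by (subst hh_rec) (simp_all add: comp_simps)
lemma M1_0_1_3_5_7[simp]: "hh M1 (3) {0, Suc 0, 3, 5, 7} = [:[:0, 3, 0, 1:], [:11, 8, 6:], [:22, 17, 4, 1:], [:24, 12, 2:], [:6, 2:], [:1:]:]"
  by (subst hh_rec) (simp_all add: comp_simps)
lemma M1_0_1_3_6_7[simp]: "hh M1 (3) {0, Suc 0, 3, 6, 7} = [:[:1, 0, 2:], [:5, 10, 1, 1:], [:14, 14, 7, 1:], [:23, 11, 2:], [:18, 7:], [:3:]:]"
  by (subst hh_rec) (simp_all add: comp_simps)
lemma M1_0_1_4_5_6[simp]: "hh M1 (3) {0, Suc 0, 4, 5, 6} = [:[:2, 0, 1:], [:7, 9, 1, 1:], [:20, 17, 8, 1:], [:22, 12, 2:], [:11, 4:], [:2:]:]"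
  by (subst hh_rec) (simp_all add: comp_simps)
lemma M1_0_1_4_5_7[simp]: "hh M1 (3) {0, Suc 0, 4, 5, 7} = [:[:0, 3, 1:], [:11, 8, 4, 2:], [:23, 16, 5:], [:22, 14, 2:], [:7, 1:], [:1:]:]"
  by (subst hh_rec) (simp_all add: comp_simps)
lemma M1_0_1_4_6_7[simp]: "hh M1 (3) {0, Suc 0, 4, 6, 7} = [:[:1, 1, 1:], [:5, 8, 3, 1:], [:15, 14, 6, 1:], [:21, 13, 2:], [:19, 6:], [:3:]:]"
  by (subst hh_rec) (simp_all add: comp_simps)
lemma M1_0_1_5_6_7[simp]: "hh M1 (3) {0, Suc 0, 5, 6, 7} = [:[:0, 2, 0, 1:], [:5, 3, 5:], [:15, 20, 6, 1:], [:22, 13, 1:], [:19, 4:], [:3:]:]"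
  by (subst hh_rec) (simp_all add: comp_simps)
lemma M1_0_2_3_4_5[simp]: "hh M1 (3) {0, 2, 3, 4, 5} = [:[:2:], [:14, 11, 3:], [:31, 21, 6, 2:], [:16, 9, 3:], [:1, 1:]:]"
  by (subst hh_rec) (simp_all add: comp_simps)
lemma M1_0_2_3_4_6[simp]: "hh M1 (3) {0, 2, 3, 4, 6} = [:[:0, 2:], [:5, 11, 6:], [:19, 11, 4, 2:], [:31, 13, 2:], [:9, 5:]:]"
  by (subst hh_rec) (simp_all add: comp_simps)
lemma M1_0_2_3_4_7[simp]: "hh M1 (3) {0, 2, 3, 4, 7} = [:0, [:8, 5, 3:], [:35, 25, 4, 2:], [:20, 11, 5:], [:1, 1:]:]"
  by (subst hh_rec) (simp_all add: comp_simps)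
lemma M1_0_2_3_5_6[simp]: "hh M1 (3) {0, 2, 3, 5, 6} = [:[:1, 0, 1:], [:6, 9, 2, 2:], [:20, 17, 7:], [:25, 13, 2:], [:11, 3:], [:1:]:]"
  by (subst hh_rec) (simp_all add: comp_simps)
lemma M1_0_2_3_5_7[simp]: "hh M1 (3) {0, 2, 3, 5, 7} = [:[:0, 1:], [:7, 9, 4, 2:], [:27, 19, 8:], [:25, 13:], [:5:]:]"
  by (subst hh_rec) (simp_all add: comp_simps)
lemma M1_0_2_3_6_7[simp]: "hh M1 (3) {0, 2, 3, 6, 7} = [:[:0, 0, 1:], [:4, 9, 4, 2:], [:12, 15, 5:], [:29, 13, 2:], [:18, 5:], [:1:]:]"
  by (subst hh_rec) (simp_all add: comp_simps)
lemma M1_0_2_4_5_6[simp]: "hh M1 (3) {0, 2, 4, 5, 6} = [:[:1, 0, 1:], [:7, 8, 3, 1:], [:21, 18, 4, 1:], [:23, 13, 4:], [:11, 3:], [:1:]:]"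
  by (subst hh_rec) (simp_all add: comp_simps)
lemma M1_0_2_4_5_7[simp]: "hh M1 (3) {0, 2, 4, 5, 7} = [:[:0, 1:], [:7, 10, 4, 1:], [:28, 18, 7, 1:], [:26, 11, 1:], [:3, 2:]:]"
  by (subst hh_rec) (simp_all add: comp_simps)
lemma M1_0_2_4_6_7[simp]: "hh M1 (3) {0, 2, 4, 6, 7} = [:[:0, 0, 1:], [:4, 10, 4, 1:], [:13, 14, 4, 1:], [:30, 11, 3:], [:16, 7:], [:1:]:]"
  by (subst hh_rec) (simp_all add: comp_simps)
lemma M1_0_2_5_6_7[simp]: "hh M1 (3) {0, 2, 5, 6, 7} = [:[:0, 1, 0, 1:], [:3, 4, 6, 1:], [:16, 19, 5:], [:22, 17, 1:], [:21, 1:], [:2:]:]"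
  by (subst hh_rec) (simp_all add: comp_simps)
lemma M1_0_3_4_5_6[simp]: "hh M1 (3) {0, 3, 4, 5, 6} = [:[:1, 3, 1, 1:], [:9, 11, 8, 1, 1:], [:22, 18, 6, 2:], [:17, 10, 3:], [:4, 2:]:]"
  by (subst hh_rec) (simp_all add: comp_simps)
lemma M1_0_3_4_5_7[simp]: "hh M1 (3) {0, 3, 4, 5, 7} = [:[:2, 1, 1:], [:13, 16, 8, 2, 1:], [:25, 20, 7, 2:], [:12, 6, 2:], [:1, 1:]:]"
  by (subst hh_rec) (simp_all add: comp_simps)
lemma M1_0_3_4_6_7[simp]: "hh M1 (3) {0, 3, 4, 6, 7} = [:[:0, 2, 1, 1:], [:5, 12, 8, 2, 1:], [:17, 13, 5, 1:], [:26, 14, 4:], [:5, 3:]:]"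
  by (subst hh_rec) (simp_all add: comp_simps)
lemma M1_0_3_5_6_7[simp]: "hh M1 (3) {0, 3, 5, 6, 7} = [:[:1, 0, 3, 0, 1:], [:6, 11, 5, 3:], [:16, 19, 8, 1:], [:20, 12, 2:], [:9, 2:], [:1:]:]"
  by (subst hh_rec) (simp_all add: comp_simps)
lemma M1_0_4_5_6_7[simp]: "hh M1 (3) {0, 4, 5, 6, 7} = [:[:1, 1, 2, 1:], [:6, 10, 6, 2, 1:], [:18, 19, 6, 1:], [:18, 12, 4:], [:9, 2:], [:1:]:]"
  by (subst hh_rec) (simp_all add: comp_simps)
lemma M1_1_2_3_4_5[simp]: "hh M1 (3) {Suc 0, 2, 3, 4, 5} = [:[:6, 2, 2:], [:16, 16, 1, 1:], [:26, 14, 7, 1:], [:15, 9, 2:], [:1, 1:]:]"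
  by (subst hh_rec) (simp_all add: comp_simps)
lemma M1_1_2_3_4_6[simp]: "hh M1 (3) {Suc 0, 2, 3, 4, 6} = [:[:2, 4:], [:10, 11, 7:], [:17, 13, 4, 2:], [:26, 9, 1:], [:9, 5:]:]"
  by (subst hh_rec) (simp_all add: comp_simps)
lemma M1_1_2_3_4_7[simp]: "hh M1 (3) {Suc 0, 2, 3, 4, 7} = [:[:4, 2, 2:], [:10, 10, 1, 1:], [:30, 18, 5, 1:], [:19, 11, 4:], [:1, 1:]:]"
  by (subst hh_rec) (simp_all add: comp_simps)
lemma M1_1_2_3_5_6[simp]: "hh M1 (3) {Suc 0, 2, 3, 5, 6} = [:[:3, 0, 1:], [:9, 13, 4, 1:], [:24, 15, 4, 1:], [:17, 12, 3:], [:10, 2:], [:1:]:]"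
  by (subst hh_rec) (simp_all add: comp_simps)
lemma M1_1_2_3_5_7[simp]: "hh M1 (3) {Suc 0, 2, 3, 5, 7} = [:[:0, 5, 1, 1:], [:15, 8, 5:], [:23, 19, 5, 1:], [:23, 8, 1:], [:3, 2:]:]"
  by (subst hh_rec) (simp_all add: comp_simps)
lemma M1_1_2_3_6_7[simp]: "hh M1 (3) {Suc 0, 2, 3, 6, 7} = [:[:2, 1, 2:], [:5, 12, 3, 1:], [:18, 14, 5, 1:], [:23, 9, 2:], [:15, 6:], [:1:]:]"
  by (subst hh_rec) (simp_all add: comp_simps)
lemma M1_1_2_4_5_6[simp]: "hh M1 (3) {Suc 0, 2, 4, 5, 6} = [:[:3, 0, 1:], [:8, 14, 3, 2:], [:23, 14, 7:], [:19, 12, 1:], [:10, 2:], [:1:]:]"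
  by (subst hh_rec) (simp_all add: comp_simps)
lemma M1_1_2_4_5_7[simp]: "hh M1 (3) {Suc 0, 2, 4, 5, 7} = [:[:0, 5, 1, 1:], [:15, 7, 5, 1:], [:22, 20, 6:], [:22, 10:], [:5:]:]"
  by (subst hh_rec) (simp_all add: comp_simps)
lemma M1_1_2_4_6_7[simp]: "hh M1 (3) {Suc 0, 2, 4, 6, 7} = [:[:2, 1, 2:], [:5, 11, 3, 2:], [:17, 15, 6:], [:22, 11, 1:], [:17, 4:], [:1:]:]"
  by (subst hh_rec) (simp_all add: comp_simps)
lemma M1_1_2_5_6_7[simp]: "hh M1 (3) {Suc 0, 2, 5, 6, 7} = [:[:0, 3, 0, 1:], [:7, 4, 8, 1:], [:16, 21, 3:], [:24, 13, 1:], [:15, 1:], [:2:]:]"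
  by (subst hh_rec) (simp_all add: comp_simps)
lemma M1_1_3_4_5_6[simp]: "hh M1 (3) {Suc 0, 3, 4, 5, 6} = [:[:3, 5, 1, 1:], [:14, 14, 11, 2, 1:], [:17, 15, 3, 1:], [:15, 8, 3:], [:4, 2:]:]"
  by (subst hh_rec) (simp_all add: comp_simps)
lemma M1_1_3_4_5_7[simp]: "hh M1 (3) {Suc 0, 3, 4, 5, 7} = [:[:6, 5, 6, 0, 1:], [:13, 16, 3, 2:], [:22, 16, 8, 2:], [:11, 6, 1:], [:1, 1:]:]"
  by (subst hh_rec) (simp_all add: comp_simps)
lemma M1_1_3_4_6_7[simp]: "hh M1 (3) {Suc 0, 3, 4, 6, 7} = [:[:2, 5, 1, 2:], [:9, 13, 10, 1, 1:], [:14, 11, 4, 1:], [:23, 12, 3:], [:5, 3:]:]"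
  by (subst hh_rec) (simp_all add: comp_simps)
lemma M1_1_3_5_6_7[simp]: "hh M1 (3) {Suc 0, 3, 5, 6, 7} = [:[:3, 2, 3, 1:], [:7, 15, 7, 3, 1:], [:20, 14, 4:], [:14, 12, 4:], [:8, 1:], [:1:]:]"
  by (subst hh_rec) (simp_all add: comp_simps)
lemma M1_1_4_5_6_7[simp]: "hh M1 (3) {Suc 0, 4, 5, 6, 7} = [:[:3, 1, 4, 0, 1:], [:7, 16, 6, 4:], [:18, 14, 6:], [:16, 12, 2:], [:8, 1:], [:1:]:]"
  by (subst hh_rec) (simp_all add: comp_simps)
lemma M1_2_3_4_5_6[simp]: "hh M1 (3) {2, 3, 4, 5, 6} = [:[:2, 6, 2, 2:], [:13, 10, 8, 0, 1:], [:20, 20, 6, 2:], [:16, 6, 2:], [:2, 2:]:]"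
  by (subst hh_rec) (simp_all add: comp_simps)
lemma M1_2_3_4_5_7[simp]: "hh M1 (3) {2, 3, 4, 5, 7} = [:[:4, 2, 2:], [:14, 21, 9, 3, 1:], [:27, 15, 5, 1:], [:8, 6, 2:]:]"
  by (subst hh_rec) (simp_all add: comp_simps)
lemma M1_2_3_4_6_7[simp]: "hh M1 (3) {2, 3, 4, 6, 7} = [:[:0, 4, 2, 2:], [:8, 13, 9, 1, 1:], [:19, 13, 3, 1:], [:24, 12, 4:], [:2, 2:]:]"
  by (subst hh_rec) (simp_all add: comp_simps)
lemma M1_2_3_5_6_7[simp]: "hh M1 (3) {2, 3, 5, 6, 7} = [:[:2, 1, 5, 1, 1:], [:7, 14, 3, 2:], [:19, 19, 9, 1:], [:17, 8, 1:], [:8, 2:]:]"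
  by (subst hh_rec) (simp_all add: comp_simps)
lemma M1_2_4_5_6_7[simp]: "hh M1 (3) {2, 4, 5, 6, 7} = [:[:2, 1, 5, 1, 1:], [:7, 14, 3, 2:], [:19, 19, 9, 1:], [:17, 8, 1:], [:8, 2:]:]"
  by (subst hh_rec) (simp_all add: comp_simps)
lemma M1_3_4_5_6_7[simp]: "hh M1 (3) {3, 4, 5, 6, 7} = [:[:2, 7, 4, 6, 0, 1:], [:12, 12, 8:], [:16, 20, 8, 4:], [:12, 4:], [:2, 2:]:]"
  by (subst hh_rec) (simp_all add: comp_simps)
lemma M1_0_1_2_3_4_5[simp]: "hh M1 (2) {0, Suc 0, 2, 3, 4, 5} = [:[:8, 8, 3, 1:], [:58, 49, 21, 3, 1:], [:122, 97, 33, 9, 1:], [:117, 73, 21, 3:], [:47, 25, 6:], [:10, 4:]:]"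
  by (subst hh_rec) (simp_all add: comp_simps)
lemma M1_0_1_2_3_4_6[simp]: "hh M1 (2) {0, Suc 0, 2, 3, 4, 6} = [:[:4, 7, 3:], [:28, 45, 20, 5:], [:83, 72, 33, 10, 2:], [:136, 77, 18, 1:], [:93, 51, 10:], [:18, 4:]:]"
  by (subst hh_rec) (simp_all add: comp_simps)
lemma M1_0_1_2_3_4_7[simp]: "hh M1 (2) {0, Suc 0, 2, 3, 4, 7} = [:[:4, 6, 3, 1:], [:34, 35, 17, 3, 1:], [:126, 93, 29, 7, 1:], [:133, 89, 29, 5:], [:55, 29, 6:], [:10, 4:]:]"
  by (subst hh_rec) (simp_all add: comp_simps)
lemma M1_0_1_2_3_5_6[simp]: "hh M1 (2) {0, Suc 0, 2, 3, 5, 6} = [:[:4, 2, 2, 1:], [:23, 30, 18, 5, 1:], [:79, 83, 32, 7, 1:], [:114, 87, 24, 3:], [:100, 43, 8:], [:36, 11:], [:6:]:]"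
  by (subst hh_rec) (simp_all add: comp_simps)
lemma M1_0_1_2_3_5_7[simp]: "hh M1 (2) {0, Suc 0, 2, 3, 5, 7} = [:[:0, 6, 5, 1, 1:], [:22, 39, 20, 8:], [:92, 85, 35, 5, 1:], [:138, 82, 18, 2:], [:86, 35, 6:], [:22, 9:], [:2:]:]"
  by (subst hh_rec) (simp_all add: comp_simps)
lemma M1_0_1_2_3_6_7[simp]: "hh M1 (2) {0, Suc 0, 2, 3, 6, 7} = [:[:2, 3, 3, 2:], [:13, 30, 20, 4, 1:], [:55, 70, 28, 8, 1:], [:118, 82, 22, 2:], [:122, 57, 11:], [:46, 14:], [:6:]:]"
  by (subst hh_rec) (simp_all add: comp_simps)
lemma M1_0_1_2_4_5_6[simp]: "hh M1 (2) {0, Suc 0, 2, 4, 5, 6} = [:[:4, 2, 2, 1:], [:23, 31, 18, 4, 1:], [:80, 81, 31, 9, 1:], [:114, 86, 26, 2:], [:97, 47, 7:], [:38, 9:], [:6:]:]"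
  by (subst hh_rec) (simp_all add: comp_simps)
lemma M1_0_1_2_4_5_7[simp]: "hh M1 (2) {0, Suc 0, 2, 4, 5, 7} = [:[:0, 6, 5, 2:], [:22, 39, 20, 6, 2:], [:92, 88, 32, 6:], [:140, 74, 24, 2:], [:82, 42, 3:], [:24, 7:], [:2:]:]"
  by (subst hh_rec) (simp_all add: comp_simps)
lemma M1_0_1_2_4_6_7[simp]: "hh M1 (2) {0, Suc 0, 2, 4, 6, 7} = [:[:2, 3, 4, 1:], [:13, 30, 18, 6, 1:], [:56, 71, 27, 7, 1:], [:118, 78, 26, 2:], [:119, 62, 9:], [:48, 12:], [:6:]:]"
  by (subst hh_rec) (simp_all add: comp_simps)
lemma M1_0_1_2_5_6_7[simp]: "hh M1 (2) {0, Suc 0, 2, 5, 6, 7} = [:[:0, 4, 2, 2, 1:], [:10, 14, 18, 7:], [:42, 68, 37, 6, 1:], [:98, 101, 20, 1:], [:128, 56, 7:], [:70, 13:], [:14:]:]"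
  by (subst hh_rec) (simp_all add: comp_simps)
lemma M1_0_1_3_4_5_6[simp]: "hh M1 (2) {0, Suc 0, 3, 4, 5, 6} = [:[:8, 8, 4, 2:], [:41, 47, 23, 5, 2:], [:102, 88, 30, 6:], [:119, 73, 23, 3:], [:68, 32, 4:], [:24, 8:]:]"
  by (subst hh_rec) (simp_all add: comp_simps)
lemma M1_0_1_3_4_5_7[simp]: "hh M1 (2) {0, Suc 0, 3, 4, 5, 7} = [:[:8, 12, 8, 1, 1:], [:54, 50, 23, 6, 1:], [:116, 93, 28, 7:], [:119, 66, 17, 2:], [:55, 31, 8:], [:10, 4:]:]"
  by (subst hh_rec) (simp_all add: comp_simps)
lemma M1_0_1_3_4_6_7[simp]: "hh M1 (2) {0, Suc 0, 3, 4, 6, 7} = [:[:4, 8, 5, 3:], [:27, 47, 23, 5, 2:], [:79, 69, 29, 5:], [:133, 81, 21, 3:], [:93, 43, 6:], [:26, 8:]:]"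
  by (subst hh_rec) (simp_all add: comp_simps)
lemma M1_0_1_3_5_6_7[simp]: "hh M1 (2) {0, Suc 0, 3, 5, 6, 7} = [:[:4, 4, 6, 2, 1:], [:21, 32, 20, 7, 1:], [:73, 80, 27, 4:], [:114, 85, 24, 3:], [:104, 42, 7:], [:40, 13:], [:6:]:]"
  by (subst hh_rec) (simp_all add: comp_simps)
lemma M1_0_1_4_5_6_7[simp]: "hh M1 (2) {0, Suc 0, 4, 5, 6, 7} = [:[:4, 4, 6, 2, 1:], [:21, 33, 20, 6, 1:], [:74, 78, 26, 6:], [:114, 84, 26, 2:], [:101, 46, 6:], [:42, 11:], [:6:]:]"
  by (subst hh_rec) (simp_all add: comp_simps)
lemma M1_0_2_3_4_5_6[simp]: "hh M1 (2) {0, 2, 3, 4, 5, 6} = [:[:4, 7, 7, 3, 1:], [:28, 38, 24, 11, 2, 1:], [:80, 99, 44, 9, 2:], [:114, 81, 28, 7:], [:71, 34, 7:], [:12, 6:]:]"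
  by (subst hh_rec) (simp_all add: comp_simps)
lemma M1_0_2_3_4_5_7[simp]: "hh M1 (2) {0, 2, 3, 4, 5, 7} = [:[:4, 6, 3, 1:], [:30, 53, 33, 14, 3, 1:], [:104, 93, 46, 9, 2:], [:125, 88, 19, 6:], [:44, 23, 9:], [:2, 2:]:]"
  by (subst hh_rec) (simp_all add: comp_simps)
lemma M1_0_2_3_4_6_7[simp]: "hh M1 (2) {0, 2, 3, 4, 6, 7} = [:[:0, 4, 6, 3, 1:], [:16, 39, 29, 12, 3, 1:], [:57, 75, 34, 7, 1:], [:137, 98, 31, 8:], [:87, 43, 10:], [:12, 6:]:]"
  by (subst hh_rec) (simp_all add: comp_simps)
lemma M1_0_2_3_5_6_7[simp]: "hh M1 (2) {0, 2, 3, 5, 6, 7} = [:[:2, 3, 5, 5, 1, 1:], [:11, 25, 22, 8, 3:], [:52, 81, 43, 15, 1:], [:98, 96, 34, 2:], [:108, 51, 6:], [:36, 9:], [:2:]:]"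
  by (subst hh_rec) (simp_all add: comp_simps)
lemma M1_0_2_4_5_6_7[simp]: "hh M1 (2) {0, 2, 4, 5, 6, 7} = [:[:2, 3, 6, 4, 2:], [:11, 25, 21, 9, 2, 1:], [:53, 84, 44, 10, 1:], [:101, 93, 29, 7:], [:108, 47, 10:], [:32, 13:], [:2:]:]"
  by (subst hh_rec) (simp_all add: comp_simps)
lemma M1_0_3_4_5_6_7[simp]: "hh M1 (2) {0, 3, 4, 5, 6, 7} = [:[:4, 8, 9, 7, 1, 1:], [:27, 39, 22, 7, 1:], [:77, 97, 46, 11, 3:], [:114, 79, 24, 5:], [:75, 36, 9:], [:12, 6:]:]"
  by (subst hh_rec) (simp_all add: comp_simps)
lemma M1_1_2_3_4_5_6[simp]: "hh M1 (2) {Suc 0, 2, 3, 4, 5, 6} = [:[:8, 9, 9, 3, 1:], [:38, 57, 31, 14, 3, 1:], [:93, 93, 40, 7, 1:], [:95, 72, 25, 6:], [:63, 28, 5:], [:12, 6:]:]"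
  by (subst hh_rec) (simp_all add: comp_simps)
lemma M1_1_2_3_4_5_7[simp]: "hh M1 (2) {Suc 0, 2, 3, 4, 5, 7} = [:[:4, 18, 9, 8, 0, 1:], [:54, 53, 39, 7, 3:], [:98, 102, 34, 12, 2:], [:109, 67, 21, 3:], [:42, 23, 7:], [:2, 2:]:]"
  by (subst hh_rec) (simp_all add: comp_simps)
lemma M1_1_2_3_4_6_7[simp]: "hh M1 (2) {Suc 0, 2, 3, 4, 6, 7} = [:[:4, 8, 11, 3, 2:], [:24, 51, 30, 14, 2, 1:], [:74, 77, 33, 7, 1:], [:116, 86, 28, 6:], [:79, 37, 8:], [:12, 6:]:]"
  by (subst hh_rec) (simp_all add: comp_simps)
lemma M1_1_2_3_5_6_7[simp]: "hh M1 (2) {Suc 0, 2, 3, 5, 6, 7} = [:[:2, 7, 7, 5, 2:], [:19, 31, 30, 11, 3, 1:], [:64, 93, 38, 7:], [:106, 83, 28, 7:], [:86, 40, 7:], [:30, 11:], [:2:]:]"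
  by (subst hh_rec) (simp_all add: comp_simps)
lemma M1_1_2_4_5_6_7[simp]: "hh M1 (2) {Suc 0, 2, 4, 5, 6, 7} = [:[:2, 7, 6, 6, 1, 1:], [:19, 31, 31, 10, 4:], [:63, 90, 37, 12:], [:103, 86, 33, 2:], [:86, 44, 3:], [:34, 7:], [:2:]:]"
  by (subst hh_rec) (simp_all add: comp_simps)
lemma M1_1_3_4_5_6_7[simp]: "hh M1 (2) {Suc 0, 3, 4, 5, 6, 7} = [:[:8, 10, 11, 7, 1, 1:], [:37, 58, 29, 10, 2:], [:90, 91, 42, 9, 2:], [:95, 70, 21, 4:], [:67, 30, 7:], [:12, 6:]:]"
  by (subst hh_rec) (simp_all add: comp_simps)
lemma M1_2_3_4_5_6_7[simp]: "hh M1 (2) {2, 3, 4, 5, 6, 7} = [:[:4, 4, 17, 6, 8, 0, 1:], [:20, 52, 24, 16:], [:73, 98, 64, 14, 7:], [:100, 76, 20, 4:], [:64, 30, 10:], [:4, 4:]:]"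
  by (subst hh_rec) (simp_all add: comp_simps)
lemma M1_0_1_2_3_4_5_6[simp]: "hh M1 (Suc 0) {0, Suc 0, 2, 3, 4, 5, 6} = [:[:28, 31, 25, 14, 4, 1:], [:168, 221, 136, 51, 18, 3, 1:], [:448, 514, 271, 85, 13, 2:], [:607, 573, 241, 59, 10:], [:525, 367, 98, 11:], [:277, 133, 24:], [:60, 15:], [:6:]:]"
  by (subst hh_rec) (simp_all add: comp_simps)
lemma M1_0_1_2_3_4_5_7[simp]: "hh M1 (Suc 0) {0, Suc 0, 2, 3, 4, 5, 7} = [:[:12, 40, 28, 14, 2, 1:], [:142, 192, 146, 55, 21, 3, 1:], [:420, 510, 245, 85, 13, 2:], [:708, 607, 247, 47, 9:], [:567, 384, 109, 19:], [:224, 104, 20:], [:44, 17:], [:2:]:]"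
  by (subst hh_rec) (simp_all add: comp_simps)
lemma M1_0_1_2_3_4_6_7[simp]: "hh M1 (Suc 0) {0, Suc 0, 2, 3, 4, 6, 7} = [:[:14, 25, 27, 14, 5, 1:], [:104, 189, 133, 59, 18, 4, 1:], [:376, 442, 233, 69, 11, 1:], [:638, 613, 263, 65, 11:], [:600, 417, 112, 13:], [:311, 150, 27:], [:70, 18:], [:6:]:]"
  by (subst hh_rec) (simp_all add: comp_simps)
lemma M1_0_1_2_3_5_6_7[simp]: "hh M1 (Suc 0) {0, Suc 0, 2, 3, 5, 6, 7} = [:[:6, 23, 23, 15, 10, 1, 1:], [:78, 132, 118, 58, 12, 4:], [:307, 438, 256, 74, 19, 1:], [:590, 602, 246, 62, 4:], [:636, 450, 124, 11:], [:384, 182, 28:], [:106, 27:], [:12:]:]"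
  by (subst hh_rec) (simp_all add: comp_simps)
lemma M1_0_1_2_4_5_6_7[simp]: "hh M1 (Suc 0) {0, Suc 0, 2, 4, 5, 6, 7} = [:[:6, 19, 20, 16, 6, 3:], [:68, 123, 104, 47, 17, 2, 1:], [:275, 384, 233, 85, 12, 1:], [:535, 565, 271, 57, 10:], [:599, 505, 131, 15:], [:444, 222, 36:], [:166, 36:], [:26:]:]"
  by (subst hh_rec) (simp_all add: comp_simps)
lemma M1_0_1_3_4_5_6_7[simp]: "hh M1 (Suc 0) {0, Suc 0, 3, 4, 5, 6, 7} = [:[:20, 30, 33, 19, 10, 2, 1:], [:128, 188, 126, 51, 12, 1:], [:369, 465, 259, 85, 18, 3:], [:582, 571, 229, 47, 5:], [:589, 421, 125, 18:], [:329, 150, 23:], [:96, 29:], [:6:]:]"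
  by (subst hh_rec) (simp_all add: comp_simps)
lemma M1_0_2_3_4_5_6_7[simp]: "hh M1 (Suc 0) {0, 2, 3, 4, 5, 6, 7} = [:[:14, 21, 35, 18, 11, 1, 1:], [:94, 183, 118, 57, 9, 3:], [:362, 474, 275, 75, 21, 2:], [:629, 591, 213, 53, 4:], [:640, 411, 131, 17:], [:316, 153, 23:], [:62, 21:], [:2:]:]"
  by (subst hh_rec) (simp_all add: comp_simps)
lemma M1_1_2_3_4_5_6_7[simp]: "hh M1 (Suc 0) {Suc 0, 2, 3, 4, 5, 6, 7} = [:[:14, 39, 30, 38, 8, 11, 0, 1:], [:124, 186, 178, 62, 30:], [:332, 495, 302, 136, 26, 10:], [:538, 586, 262, 50, 6:], [:512, 402, 128, 29:], [:276, 124, 24:], [:56, 23:], [:2:]:]"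
  by (subst hh_rec) (simp_all add: comp_simps)
lemma M1_0_1_2_3_4_5_6_7[simp]: "hh M1 (0) {0, Suc 0, 2, 3, 4, 5, 6, 7} = [:[:40, 88, 130, 82, 69, 12, 14, 0, 1:], [:360, 742, 648, 402, 112, 44:], [:1520, 2434, 1804, 748, 268, 44, 14:], [:3320, 4152, 2256, 748, 112, 12:], [:4353, 4152, 1804, 402, 69:], [:3320, 2434, 648, 82:], [:1520, 742, 130:], [:360, 88:], [:40:]:]"
  by (subst hh_rec) (simp_all add: comp_simps)
lemma M2_0[simp]: "hh M2 (7) {0} = [:0, [:1:]:]"
  by (subst hh_rec) (simp_all add: comp_simps)
lemma M2_1[simp]: "hh M2 (7) {Suc 0} = [:[:1:]:]"
  by (subst hh_rec) (simp_all add: comp_simps)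
lemma M2_2[simp]: "hh M2 (7) {2} = [:[:1:]:]"
  by (subst hh_rec) (simp_all add: comp_simps)
lemma M2_3[simp]: "hh M2 (7) {3} = [:0, [:1:]:]"
  by (subst hh_rec) (simp_all add: comp_simps)
lemma M2_4[simp]: "hh M2 (7) {4} = [:0, [:1:]:]"
  by (subst hh_rec) (simp_all add: comp_simps)
lemma M2_5[simp]: "hh M2 (7) {5} = [:0, [:1:]:]"
  by (subst hh_rec) (simp_all add: comp_simps)
lemma M2_6[simp]: "hh M2 (7) {6} = [:[:1:]:]"
  by (subst hh_rec) (simp_all add: comp_simps)
lemma M2_7[simp]: "hh M2 (7) {7} = [:[:0, 1:]:]"
  by (subst hh_rec) (simp_all add: comp_simps)
lemma M2_0_1[simp]: "hh M2 (6) {0, Suc 0} = [:0, [:1:], [:1:]:]"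
  by (subst hh_rec) (simp_all add: comp_simps)
lemma M2_0_2[simp]: "hh M2 (6) {0, 2} = [:0, [:1:], [:1:]:]"
  by (subst hh_rec) (simp_all add: comp_simps)
lemma M2_0_3[simp]: "hh M2 (6) {0, 3} = [:0, 0, [:2:]:]"
  by (subst hh_rec) (simp_all add: comp_simps)
lemma M2_0_4[simp]: "hh M2 (6) {0, 4} = [:0, [:1:], [:1:]:]"
  by (subst hh_rec) (simp_all add: comp_simps)
lemma M2_0_5[simp]: "hh M2 (6) {0, 5} = [:0, 0, [:2:]:]"
  by (subst hh_rec) (simp_all add: comp_simps)
lemma M2_0_6[simp]: "hh M2 (6) {0, 6} = [:0, [:1, 1:]:]"
  by (subst hh_rec) (simp_all add: comp_simps)
lemma M2_0_7[simp]: "hh M2 (6) {0, 7} = [:0, [:1, 1:]:]"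
  by (subst hh_rec) (simp_all add: comp_simps)
lemma M2_1_2[simp]: "hh M2 (6) {Suc 0, 2} = [:0, [:2:]:]"
  by (subst hh_rec) (simp_all add: comp_simps)
lemma M2_1_3[simp]: "hh M2 (6) {Suc 0, 3} = [:0, [:1:], [:1:]:]"
  by (subst hh_rec) (simp_all add: comp_simps)
lemma M2_1_4[simp]: "hh M2 (6) {Suc 0, 4} = [:[:1:], 0, [:1:]:]"
  by (subst hh_rec) (simp_all add: comp_simps)
lemma M2_1_5[simp]: "hh M2 (6) {Suc 0, 5} = [:0, [:1:], [:1:]:]"
  by (subst hh_rec) (simp_all add: comp_simps)
lemma M2_1_6[simp]: "hh M2 (6) {Suc 0, 6} = [:[:0, 1:], [:1:]:]"
  by (subst hh_rec) (simp_all add: comp_simps)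
lemma M2_1_7[simp]: "hh M2 (6) {Suc 0, 7} = [:[:1:], [:0, 1:]:]"
  by (subst hh_rec) (simp_all add: comp_simps)
lemma M2_2_3[simp]: "hh M2 (6) {2, 3} = [:0, [:1:], [:1:]:]"
  by (subst hh_rec) (simp_all add: comp_simps)
lemma M2_2_4[simp]: "hh M2 (6) {2, 4} = [:[:1:], 0, [:1:]:]"
  by (subst hh_rec) (simp_all add: comp_simps)
lemma M2_2_5[simp]: "hh M2 (6) {2, 5} = [:0, [:1:], [:1:]:]"
  by (subst hh_rec) (simp_all add: comp_simps)
lemma M2_2_6[simp]: "hh M2 (6) {2, 6} = [:[:0, 1:], [:1:]:]"
  by (subst hh_rec) (simp_all add: comp_simps)
lemma M2_2_7[simp]: "hh M2 (6) {2, 7} = [:[:1:], [:0, 1:]:]"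
  by (subst hh_rec) (simp_all add: comp_simps)
lemma M2_3_4[simp]: "hh M2 (6) {3, 4} = [:0, [:1:], [:1:]:]"
  by (subst hh_rec) (simp_all add: comp_simps)
lemma M2_3_5[simp]: "hh M2 (6) {3, 5} = [:0, 0, [:2:]:]"
  by (subst hh_rec) (simp_all add: comp_simps)
lemma M2_3_6[simp]: "hh M2 (6) {3, 6} = [:0, [:1, 1:]:]"
  by (subst hh_rec) (simp_all add: comp_simps)
lemma M2_3_7[simp]: "hh M2 (6) {3, 7} = [:0, [:1, 1:]:]"
  by (subst hh_rec) (simp_all add: comp_simps)
lemma M2_4_5[simp]: "hh M2 (6) {4, 5} = [:0, [:1:], [:1:]:]"
  by (subst hh_rec) (simp_all add: comp_simps)
lemma M2_4_6[simp]: "hh M2 (6) {4, 6} = [:[:1:], [:0, 1:]:]"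
  by (subst hh_rec) (simp_all add: comp_simps)
lemma M2_4_7[simp]: "hh M2 (6) {4, 7} = [:[:0, 1:], [:1:]:]"
  by (subst hh_rec) (simp_all add: comp_simps)
lemma M2_5_6[simp]: "hh M2 (6) {5, 6} = [:0, [:1, 1:]:]"
  by (subst hh_rec) (simp_all add: comp_simps)
lemma M2_5_7[simp]: "hh M2 (6) {5, 7} = [:0, [:1, 1:]:]"
  by (subst hh_rec) (simp_all add: comp_simps)
lemma M2_6_7[simp]: "hh M2 (6) {6, 7} = [:[:1, 0, 1:]:]"
  by (subst hh_rec) (simp_all add: comp_simps)
lemma M2_0_1_2[simp]: "hh M2 (5) {0, Suc 0, 2} = [:0, 0, [:4:], [:2:]:]"
  by (subst hh_rec) (simp_all add: comp_simps)
lemma M2_0_1_3[simp]: "hh M2 (5) {0, Suc 0, 3} = [:0, [:1:], [:2:], [:3:]:]"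
  by (subst hh_rec) (simp_all add: comp_simps)
lemma M2_0_1_4[simp]: "hh M2 (5) {0, Suc 0, 4} = [:0, [:2:], [:2:], [:2:]:]"
  by (subst hh_rec) (simp_all add: comp_simps)
lemma M2_0_1_5[simp]: "hh M2 (5) {0, Suc 0, 5} = [:0, [:0, 1:], [:1, 1:], [:3:]:]"
  by (subst hh_rec) (simp_all add: comp_simps)
lemma M2_0_1_6[simp]: "hh M2 (5) {0, Suc 0, 6} = [:0, [:0, 1:], [:3, 1:], [:1:]:]"
  by (subst hh_rec) (simp_all add: comp_simps)
lemma M2_0_1_7[simp]: "hh M2 (5) {0, Suc 0, 7} = [:0, [:1:], [:2, 2:], [:1:]:]"
  by (subst hh_rec) (simp_all add: comp_simps)
lemma M2_0_2_3[simp]: "hh M2 (5) {0, 2, 3} = [:0, [:1:], [:2:], [:3:]:]"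
  by (subst hh_rec) (simp_all add: comp_simps)
lemma M2_0_2_4[simp]: "hh M2 (5) {0, 2, 4} = [:0, [:2:], [:2:], [:2:]:]"
  by (subst hh_rec) (simp_all add: comp_simps)
lemma M2_0_2_5[simp]: "hh M2 (5) {0, 2, 5} = [:0, [:0, 1:], [:1, 1:], [:3:]:]"
  by (subst hh_rec) (simp_all add: comp_simps)
lemma M2_0_2_6[simp]: "hh M2 (5) {0, 2, 6} = [:0, [:0, 1:], [:3, 1:], [:1:]:]"
  by (subst hh_rec) (simp_all add: comp_simps)
lemma M2_0_2_7[simp]: "hh M2 (5) {0, 2, 7} = [:0, [:1:], [:2, 2:], [:1:]:]"
  by (subst hh_rec) (simp_all add: comp_simps)
lemma M2_0_3_4[simp]: "hh M2 (5) {0, 3, 4} = [:0, [:1:], [:4:], [:1:]:]"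
  by (subst hh_rec) (simp_all add: comp_simps)
lemma M2_0_3_5[simp]: "hh M2 (5) {0, 3, 5} = [:0, 0, [:2, 2:], [:2:]:]"
  by (subst hh_rec) (simp_all add: comp_simps)
lemma M2_0_3_6[simp]: "hh M2 (5) {0, 3, 6} = [:0, [:1, 1:], [:1, 1:], [:2:]:]"
  by (subst hh_rec) (simp_all add: comp_simps)
lemma M2_0_3_7[simp]: "hh M2 (5) {0, 3, 7} = [:0, [:1, 1:], [:1, 1:], [:2:]:]"
  by (subst hh_rec) (simp_all add: comp_simps)
lemma M2_0_4_5[simp]: "hh M2 (5) {0, 4, 5} = [:0, [:0, 1:], [:3, 1:], [:1:]:]"
  by (subst hh_rec) (simp_all add: comp_simps)
lemma M2_0_4_6[simp]: "hh M2 (5) {0, 4, 6} = [:0, [:2, 1:], [:1, 1:], [:1:]:]"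
  by (subst hh_rec) (simp_all add: comp_simps)
lemma M2_0_4_7[simp]: "hh M2 (5) {0, 4, 7} = [:0, [:1, 2:], [:2:], [:1:]:]"
  by (subst hh_rec) (simp_all add: comp_simps)
lemma M2_0_5_6[simp]: "hh M2 (5) {0, 5, 6} = [:0, [:0, 1, 1:], [:1, 1:], [:2:]:]"
  by (subst hh_rec) (simp_all add: comp_simps)
lemma M2_0_5_7[simp]: "hh M2 (5) {0, 5, 7} = [:0, [:0, 1, 1:], [:1, 1:], [:2:]:]"
  by (subst hh_rec) (simp_all add: comp_simps)
lemma M2_0_6_7[simp]: "hh M2 (5) {0, 6, 7} = [:0, [:1, 0, 1:], [:2, 2:]:]"
  by (subst hh_rec) (simp_all add: comp_simps)
lemma M2_1_2_3[simp]: "hh M2 (5) {Suc 0, 2, 3} = [:0, [:2:], [:2:], [:2:]:]"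
  by (subst hh_rec) (simp_all add: comp_simps)
lemma M2_1_2_4[simp]: "hh M2 (5) {Suc 0, 2, 4} = [:0, [:4:], 0, [:2:]:]"
  by (subst hh_rec) (simp_all add: comp_simps)
lemma M2_1_2_5[simp]: "hh M2 (5) {Suc 0, 2, 5} = [:0, [:0, 2:], [:2:], [:2:]:]"
  by (subst hh_rec) (simp_all add: comp_simps)
lemma M2_1_2_6[simp]: "hh M2 (5) {Suc 0, 2, 6} = [:0, [:0, 2:], [:4:]:]"
  by (subst hh_rec) (simp_all add: comp_simps)
lemma M2_1_2_7[simp]: "hh M2 (5) {Suc 0, 2, 7} = [:0, [:2:], [:2, 2:]:]"
  by (subst hh_rec) (simp_all add: comp_simps)
lemma M2_1_3_4[simp]: "hh M2 (5) {Suc 0, 3, 4} = [:[:1:], [:1:], [:3:], [:1:]:]"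
  by (subst hh_rec) (simp_all add: comp_simps)
lemma M2_1_3_5[simp]: "hh M2 (5) {Suc 0, 3, 5} = [:0, [:1, 1:], [:1, 1:], [:2:]:]"
  by (subst hh_rec) (simp_all add: comp_simps)
lemma M2_1_3_6[simp]: "hh M2 (5) {Suc 0, 3, 6} = [:[:0, 1:], [:1:], [:2, 1:], [:1:]:]"
  by (subst hh_rec) (simp_all add: comp_simps)
lemma M2_1_3_7[simp]: "hh M2 (5) {Suc 0, 3, 7} = [:[:1:], [:0, 1:], [:2, 1:], [:1:]:]"
  by (subst hh_rec) (simp_all add: comp_simps)
lemma M2_1_4_5[simp]: "hh M2 (5) {Suc 0, 4, 5} = [:[:0, 1:], [:1:], [:2, 1:], [:1:]:]"
  by (subst hh_rec) (simp_all add: comp_simps)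
lemma M2_1_4_6[simp]: "hh M2 (5) {Suc 0, 4, 6} = [:[:0, 1:], [:3:], [:0, 1:], [:1:]:]"
  by (subst hh_rec) (simp_all add: comp_simps)
lemma M2_1_4_7[simp]: "hh M2 (5) {Suc 0, 4, 7} = [:[:1:], [:1, 2:], [:1:], [:1:]:]"
  by (subst hh_rec) (simp_all add: comp_simps)
lemma M2_1_5_6[simp]: "hh M2 (5) {Suc 0, 5, 6} = [:[:0, 0, 1:], [:0, 1:], [:2, 1:], [:1:]:]"
  by (subst hh_rec) (simp_all add: comp_simps)
lemma M2_1_5_7[simp]: "hh M2 (5) {Suc 0, 5, 7} = [:[:0, 1:], [:0, 0, 1:], [:2, 1:], [:1:]:]"
  by (subst hh_rec) (simp_all add: comp_simps)
lemma M2_1_6_7[simp]: "hh M2 (5) {Suc 0, 6, 7} = [:0, [:2, 1, 1:], [:1, 1:]:]"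
  by (subst hh_rec) (simp_all add: comp_simps)
lemma M2_2_3_4[simp]: "hh M2 (5) {2, 3, 4} = [:[:1:], [:1:], [:3:], [:1:]:]"
  by (subst hh_rec) (simp_all add: comp_simps)
lemma M2_2_3_5[simp]: "hh M2 (5) {2, 3, 5} = [:0, [:1, 1:], [:1, 1:], [:2:]:]"
  by (subst hh_rec) (simp_all add: comp_simps)
lemma M2_2_3_6[simp]: "hh M2 (5) {2, 3, 6} = [:[:0, 1:], [:1:], [:2, 1:], [:1:]:]"
  by (subst hh_rec) (simp_all add: comp_simps)
lemma M2_2_3_7[simp]: "hh M2 (5) {2, 3, 7} = [:[:1:], [:0, 1:], [:2, 1:], [:1:]:]"
  by (subst hh_rec) (simp_all add: comp_simps)
lemma M2_2_4_5[simp]: "hh M2 (5) {2, 4, 5} = [:[:0, 1:], [:1:], [:2, 1:], [:1:]:]"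
  by (subst hh_rec) (simp_all add: comp_simps)
lemma M2_2_4_6[simp]: "hh M2 (5) {2, 4, 6} = [:[:0, 1:], [:3:], [:0, 1:], [:1:]:]"
  by (subst hh_rec) (simp_all add: comp_simps)
lemma M2_2_4_7[simp]: "hh M2 (5) {2, 4, 7} = [:[:1:], [:1, 2:], [:1:], [:1:]:]"
  by (subst hh_rec) (simp_all add: comp_simps)
lemma M2_2_5_6[simp]: "hh M2 (5) {2, 5, 6} = [:[:0, 0, 1:], [:0, 1:], [:2, 1:], [:1:]:]"
  by (subst hh_rec) (simp_all add: comp_simps)
lemma M2_2_5_7[simp]: "hh M2 (5) {2, 5, 7} = [:[:0, 1:], [:0, 0, 1:], [:2, 1:], [:1:]:]"
  by (subst hh_rec) (simp_all add: comp_simps)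
lemma M2_2_6_7[simp]: "hh M2 (5) {2, 6, 7} = [:0, [:2, 1, 1:], [:1, 1:]:]"
  by (subst hh_rec) (simp_all add: comp_simps)
lemma M2_3_4_5[simp]: "hh M2 (5) {3, 4, 5} = [:0, [:1, 1:], [:3, 1:]:]"
  by (subst hh_rec) (simp_all add: comp_simps)
lemma M2_3_4_6[simp]: "hh M2 (5) {3, 4, 6} = [:[:1:], [:1, 2:], [:1:], [:1:]:]"
  by (subst hh_rec) (simp_all add: comp_simps)
lemma M2_3_4_7[simp]: "hh M2 (5) {3, 4, 7} = [:[:0, 1:], [:2, 1:], [:1:], [:1:]:]"
  by (subst hh_rec) (simp_all add: comp_simps)
lemma M2_3_5_6[simp]: "hh M2 (5) {3, 5, 6} = [:0, [:1, 2, 1:], 0, [:2:]:]"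
  by (subst hh_rec) (simp_all add: comp_simps)
lemma M2_3_5_7[simp]: "hh M2 (5) {3, 5, 7} = [:0, [:1, 2, 1:], 0, [:2:]:]"
  by (subst hh_rec) (simp_all add: comp_simps)
lemma M2_3_6_7[simp]: "hh M2 (5) {3, 6, 7} = [:[:1, 0, 1:], 0, [:2, 2:]:]"
  by (subst hh_rec) (simp_all add: comp_simps)
lemma M2_4_5_6[simp]: "hh M2 (5) {4, 5, 6} = [:[:0, 1:], [:1, 1, 1:], [:1:], [:1:]:]"
  by (subst hh_rec) (simp_all add: comp_simps)
lemma M2_4_5_7[simp]: "hh M2 (5) {4, 5, 7} = [:[:0, 0, 1:], [:1, 2:], [:1:], [:1:]:]"
  by (subst hh_rec) (simp_all add: comp_simps)
lemma M2_4_6_7[simp]: "hh M2 (5) {4, 6, 7} = [:[:1, 0, 1:], [:1, 1:], [:1, 1:]:]"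
  by (subst hh_rec) (simp_all add: comp_simps)
lemma M2_5_6_7[simp]: "hh M2 (5) {5, 6, 7} = [:[:0, 1, 0, 1:], 0, [:2, 2:]:]"
  by (subst hh_rec) (simp_all add: comp_simps)
lemma M2_0_1_2_3[simp]: "hh M2 (4) {0, Suc 0, 2, 3} = [:0, [:3:], [:9:], [:9:], [:3:]:]"
  by (subst hh_rec) (simp_all add: comp_simps)
lemma M2_0_1_2_4[simp]: "hh M2 (4) {0, Suc 0, 2, 4} = [:0, [:6:], [:4, 4:], [:6, 2:], [:2:]:]"
  by (subst hh_rec) (simp_all add: comp_simps)
lemma M2_0_1_2_5[simp]: "hh M2 (4) {0, Suc 0, 2, 5} = [:0, [:0, 3:], [:7, 2:], [:8, 1:], [:3:]:]"
  by (subst hh_rec) (simp_all add: comp_simps)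
lemma M2_0_1_2_6[simp]: "hh M2 (4) {0, Suc 0, 2, 6} = [:0, [:0, 3:], [:11, 2:], [:6, 1:], [:1:]:]"
  by (subst hh_rec) (simp_all add: comp_simps)
lemma M2_0_1_2_7[simp]: "hh M2 (4) {0, Suc 0, 2, 7} = [:0, [:3:], [:5, 4:], [:7, 2:], [:3:]:]"
  by (subst hh_rec) (simp_all add: comp_simps)
lemma M2_0_1_3_4[simp]: "hh M2 (4) {0, Suc 0, 3, 4} = [:[:1:], [:3, 1:], [:6, 2:], [:7, 3:], [:1:]:]"
  by (subst hh_rec) (simp_all add: comp_simps)
lemma M2_0_1_3_5[simp]: "hh M2 (4) {0, Suc 0, 3, 5} = [:0, [:2, 2:], [:4, 2:], [:10, 2:], [:2:]:]"
  by (subst hh_rec) (simp_all add: comp_simps)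
lemma M2_0_1_3_6[simp]: "hh M2 (4) {0, Suc 0, 3, 6} = [:[:0, 1:], [:2, 1:], [:8, 3:], [:6, 1:], [:2:]:]"
  by (subst hh_rec) (simp_all add: comp_simps)
lemma M2_0_1_3_7[simp]: "hh M2 (4) {0, Suc 0, 3, 7} = [:[:1:], [:1, 1:], [:6, 4:], [:5, 1:], [:5:]:]"
  by (subst hh_rec) (simp_all add: comp_simps)
lemma M2_0_1_4_5[simp]: "hh M2 (4) {0, Suc 0, 4, 5} = [:[:0, 1:], [:3, 0, 1:], [:4, 3, 1:], [:6, 4:], [:1:]:]"
  by (subst hh_rec) (simp_all add: comp_simps)
lemma M2_0_1_4_6[simp]: "hh M2 (4) {0, Suc 0, 4, 6} = [:[:0, 1:], [:5, 0, 1:], [:4, 5, 1:], [:4, 2:], [:1:]:]"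
  by (subst hh_rec) (simp_all add: comp_simps)
lemma M2_0_1_4_7[simp]: "hh M2 (4) {0, Suc 0, 4, 7} = [:[:1:], [:1, 3:], [:4, 4, 2:], [:5, 1:], [:3:]:]"
  by (subst hh_rec) (simp_all add: comp_simps)
lemma M2_0_1_5_6[simp]: "hh M2 (4) {0, Suc 0, 5, 6} = [:[:0, 0, 1:], [:0, 3:], [:6, 4, 1:], [:6, 1:], [:2:]:]"
  by (subst hh_rec) (simp_all add: comp_simps)
lemma M2_0_1_5_7[simp]: "hh M2 (4) {0, Suc 0, 5, 7} = [:[:0, 1:], [:1, 0, 1:], [:4, 5, 1:], [:4, 2:], [:5:]:]"
  by (subst hh_rec) (simp_all add: comp_simps)
lemma M2_0_1_6_7[simp]: "hh M2 (4) {0, Suc 0, 6, 7} = [:0, [:3, 1, 1:], [:4, 4, 1:], [:6, 3:], [:1:]:]"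
  by (subst hh_rec) (simp_all add: comp_simps)
lemma M2_0_2_3_4[simp]: "hh M2 (4) {0, 2, 3, 4} = [:[:1:], [:4, 1:], [:9, 2:], [:4, 3:]:]"
  by (subst hh_rec) (simp_all add: comp_simps)
lemma M2_0_2_3_5[simp]: "hh M2 (4) {0, 2, 3, 5} = [:0, [:2, 2:], [:6, 4:], [:10:]:]"
  by (subst hh_rec) (simp_all add: comp_simps)
lemma M2_0_2_3_6[simp]: "hh M2 (4) {0, 2, 3, 6} = [:[:0, 1:], [:3, 2:], [:8, 3:], [:7:]:]"
  by (subst hh_rec) (simp_all add: comp_simps)
lemma M2_0_2_3_7[simp]: "hh M2 (4) {0, 2, 3, 7} = [:[:1:], [:2, 2:], [:6, 4:], [:6:], [:3:]:]"
  by (subst hh_rec) (simp_all add: comp_simps)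
lemma M2_0_2_4_5[simp]: "hh M2 (4) {0, 2, 4, 5} = [:[:0, 1:], [:3, 1, 1:], [:7, 3, 1:], [:4, 3:]:]"
  by (subst hh_rec) (simp_all add: comp_simps)
lemma M2_0_2_4_6[simp]: "hh M2 (4) {0, 2, 4, 6} = [:[:0, 1:], [:7, 1, 1:], [:3, 5, 1:], [:4, 1:]:]"
  by (subst hh_rec) (simp_all add: comp_simps)
lemma M2_0_2_4_7[simp]: "hh M2 (4) {0, 2, 4, 7} = [:[:1:], [:2, 5:], [:5, 2, 2:], [:4, 1:], [:2:]:]"
  by (subst hh_rec) (simp_all add: comp_simps)
lemma M2_0_2_5_6[simp]: "hh M2 (4) {0, 2, 5, 6} = [:[:0, 0, 1:], [:0, 4, 1:], [:7, 4:], [:7:]:]"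
  by (subst hh_rec) (simp_all add: comp_simps)
lemma M2_0_2_5_7[simp]: "hh M2 (4) {0, 2, 5, 7} = [:[:0, 1:], [:1, 1, 2:], [:5, 5:], [:5, 1:], [:3:]:]"
  by (subst hh_rec) (simp_all add: comp_simps)
lemma M2_0_2_6_7[simp]: "hh M2 (4) {0, 2, 6, 7} = [:0, [:4, 1, 2:], [:5, 6:], [:4, 1:], [:1:]:]"
  by (subst hh_rec) (simp_all add: comp_simps)
lemma M2_0_3_4_5[simp]: "hh M2 (4) {0, 3, 4, 5} = [:0, [:2, 2:], [:10, 4, 2:], [:2, 2:]:]"
  by (subst hh_rec) (simp_all add: comp_simps)
lemma M2_0_3_4_6[simp]: "hh M2 (4) {0, 3, 4, 6} = [:[:1:], [:4, 4, 1:], [:6, 2, 1:], [:3, 2:]:]"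
  by (subst hh_rec) (simp_all add: comp_simps)
lemma M2_0_3_4_7[simp]: "hh M2 (4) {0, 3, 4, 7} = [:[:0, 1:], [:3, 4, 1:], [:4, 1, 1:], [:6, 2:], [:1:]:]"
  by (subst hh_rec) (simp_all add: comp_simps)
lemma M2_0_3_5_6[simp]: "hh M2 (4) {0, 3, 5, 6} = [:0, [:2, 4, 2:], [:4, 4:], [:8:]:]"
  by (subst hh_rec) (simp_all add: comp_simps)
lemma M2_0_3_5_7[simp]: "hh M2 (4) {0, 3, 5, 7} = [:0, [:2, 4, 2:], [:2, 2:], [:8, 2:], [:2:]:]"
  by (subst hh_rec) (simp_all add: comp_simps)
lemma M2_0_3_6_7[simp]: "hh M2 (4) {0, 3, 6, 7} = [:[:1, 0, 1:], [:2, 1, 1:], [:6, 6:], [:3, 1:], [:2:]:]"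
  by (subst hh_rec) (simp_all add: comp_simps)
lemma M2_0_4_5_6[simp]: "hh M2 (4) {0, 4, 5, 6} = [:[:0, 1:], [:3, 3, 2, 1:], [:5, 3, 1:], [:3, 2:]:]"
  by (subst hh_rec) (simp_all add: comp_simps)
lemma M2_0_4_5_7[simp]: "hh M2 (4) {0, 4, 5, 7} = [:[:0, 0, 1:], [:2, 4, 1, 1:], [:3, 2, 1:], [:5, 3:], [:1:]:]"
  by (subst hh_rec) (simp_all add: comp_simps)
lemma M2_0_4_6_7[simp]: "hh M2 (4) {0, 4, 6, 7} = [:[:1, 0, 1:], [:2, 4, 0, 1:], [:5, 4, 2:], [:2, 1:], [:1:]:]"
  by (subst hh_rec) (simp_all add: comp_simps)
lemma M2_0_5_6_7[simp]: "hh M2 (4) {0, 5, 6, 7} = [:[:0, 1, 0, 1:], [:1, 1, 2:], [:5, 6, 1:], [:3, 1:], [:2:]:]"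
  by (subst hh_rec) (simp_all add: comp_simps)
lemma M2_1_2_3_4[simp]: "hh M2 (4) {Suc 0, 2, 3, 4} = [:[:1:], [:6, 2:], [:4, 2:], [:6, 2:], [:1:]:]"
  by (subst hh_rec) (simp_all add: comp_simps)
lemma M2_1_2_3_5[simp]: "hh M2 (4) {Suc 0, 2, 3, 5} = [:0, [:3, 3:], [:6, 2:], [:7, 1:], [:2:]:]"
  by (subst hh_rec) (simp_all add: comp_simps)
lemma M2_1_2_3_6[simp]: "hh M2 (4) {Suc 0, 2, 3, 6} = [:[:0, 1:], [:3, 3:], [:9, 1:], [:5, 1:], [:1:]:]"
  by (subst hh_rec) (simp_all add: comp_simps)
lemma M2_1_2_3_7[simp]: "hh M2 (4) {Suc 0, 2, 3, 7} = [:[:1:], [:3, 1:], [:6, 4:], [:5, 1:], [:3:]:]"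
  by (subst hh_rec) (simp_all add: comp_simps)
lemma M2_1_2_4_5[simp]: "hh M2 (4) {Suc 0, 2, 4, 5} = [:[:0, 1:], [:5, 1, 2:], [:3, 3:], [:5, 3:], [:1:]:]"
  by (subst hh_rec) (simp_all add: comp_simps)
lemma M2_1_2_4_6[simp]: "hh M2 (4) {Suc 0, 2, 4, 6} = [:[:0, 1:], [:7, 1, 2:], [:3, 5:], [:3, 1:], [:1:]:]"
  by (subst hh_rec) (simp_all add: comp_simps)
lemma M2_1_2_4_7[simp]: "hh M2 (4) {Suc 0, 2, 4, 7} = [:[:1:], [:2, 4:], [:6, 4, 2:], [:2:], [:3:]:]"
  by (subst hh_rec) (simp_all add: comp_simps)
lemma M2_1_2_5_6[simp]: "hh M2 (4) {Suc 0, 2, 5, 6} = [:[:0, 0, 1:], [:0, 5, 1:], [:8, 2:], [:5, 1:], [:1:]:]"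
  by (subst hh_rec) (simp_all add: comp_simps)
lemma M2_1_2_5_7[simp]: "hh M2 (4) {Suc 0, 2, 5, 7} = [:[:0, 1:], [:2, 1, 1:], [:4, 5, 1:], [:5, 1:], [:3:]:]"
  by (subst hh_rec) (simp_all add: comp_simps)
lemma M2_1_2_6_7[simp]: "hh M2 (4) {Suc 0, 2, 6, 7} = [:0, [:4, 1, 1:], [:5, 6, 1:], [:5, 1:]:]"
  by (subst hh_rec) (simp_all add: comp_simps)
lemma M2_1_3_4_5[simp]: "hh M2 (4) {Suc 0, 3, 4, 5} = [:[:1, 1:], [:2, 1, 1:], [:6, 3, 1:], [:5, 3:]:]"
  by (subst hh_rec) (simp_all add: comp_simps)
lemma M2_1_3_4_6[simp]: "hh M2 (4) {Suc 0, 3, 4, 6} = [:[:1, 1, 1:], [:5, 1:], [:4, 5, 1:], [:3, 1:], [:1:]:]"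
  by (subst hh_rec) (simp_all add: comp_simps)
lemma M2_1_3_4_7[simp]: "hh M2 (4) {Suc 0, 3, 4, 7} = [:[:1, 1:], [:2, 3, 1:], [:4, 3, 1:], [:5, 1:], [:2:]:]"
  by (subst hh_rec) (simp_all add: comp_simps)
lemma M2_1_3_5_6[simp]: "hh M2 (4) {Suc 0, 3, 5, 6} = [:[:0, 1, 1:], [:2, 2:], [:6, 5, 1:], [:4:], [:2:]:]"
  by (subst hh_rec) (simp_all add: comp_simps)
lemma M2_1_3_5_7[simp]: "hh M2 (4) {Suc 0, 3, 5, 7} = [:[:1, 1:], [:0, 1, 1:], [:6, 5, 1:], [:3, 1:], [:4:]:]"
  by (subst hh_rec) (simp_all add: comp_simps)
lemma M2_1_3_6_7[simp]: "hh M2 (4) {Suc 0, 3, 6, 7} = [:[:1:], [:3, 3, 2:], [:4, 2:], [:5, 3:], [:1:]:]"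
  by (subst hh_rec) (simp_all add: comp_simps)
lemma M2_1_4_5_6[simp]: "hh M2 (4) {Suc 0, 4, 5, 6} = [:[:0, 2, 0, 1:], [:4, 1, 1:], [:3, 5, 2:], [:3, 1:], [:1:]:]"
  by (subst hh_rec) (simp_all add: comp_simps)
lemma M2_1_4_5_7[simp]: "hh M2 (4) {Suc 0, 4, 5, 7} = [:[:1, 0, 1:], [:1, 3, 1, 1:], [:3, 4, 1:], [:4, 2:], [:2:]:]"
  by (subst hh_rec) (simp_all add: comp_simps)
lemma M2_1_4_6_7[simp]: "hh M2 (4) {Suc 0, 4, 6, 7} = [:[:1:], [:2, 5, 2, 1:], [:5, 2, 1:], [:2, 2:], [:1:]:]"
  by (subst hh_rec) (simp_all add: comp_simps)
lemma M2_1_5_6_7[simp]: "hh M2 (4) {Suc 0, 5, 6, 7} = [:[:0, 1:], [:2, 2, 3, 1:], [:3, 3:], [:5, 3:], [:1:]:]"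
  by (subst hh_rec) (simp_all add: comp_simps)
lemma M2_2_3_4_5[simp]: "hh M2 (4) {2, 3, 4, 5} = [:[:1, 1:], [:3, 2, 1:], [:8, 3, 1:], [:2, 2:]:]"
  by (subst hh_rec) (simp_all add: comp_simps)
lemma M2_2_3_4_6[simp]: "hh M2 (4) {2, 3, 4, 6} = [:[:2, 1, 1:], [:5, 3:], [:4, 3, 1:], [:3, 1:]:]"
  by (subst hh_rec) (simp_all add: comp_simps)
lemma M2_2_3_4_7[simp]: "hh M2 (4) {2, 3, 4, 7} = [:[:1, 2:], [:4, 3, 1:], [:3, 2, 1:], [:5, 1:], [:1:]:]"
  by (subst hh_rec) (simp_all add: comp_simps)
lemma M2_2_3_5_6[simp]: "hh M2 (4) {2, 3, 5, 6} = [:[:0, 1, 1:], [:3, 4, 1:], [:5, 3:], [:6:]:]"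
  by (subst hh_rec) (simp_all add: comp_simps)
lemma M2_2_3_5_7[simp]: "hh M2 (4) {2, 3, 5, 7} = [:[:1, 1:], [:1, 3, 2:], [:5, 3:], [:5, 1:], [:2:]:]"
  by (subst hh_rec) (simp_all add: comp_simps)
lemma M2_2_3_6_7[simp]: "hh M2 (4) {2, 3, 6, 7} = [:[:2, 0, 1:], [:2, 3, 1:], [:6, 4:], [:3, 1:], [:1:]:]"
  by (subst hh_rec) (simp_all add: comp_simps)
lemma M2_2_4_5_6[simp]: "hh M2 (4) {2, 4, 5, 6} = [:[:0, 3, 0, 1:], [:5, 1, 2:], [:3, 4, 1:], [:3, 1:]:]"
  by (subst hh_rec) (simp_all add: comp_simps)
lemma M2_2_4_5_7[simp]: "hh M2 (4) {2, 4, 5, 7} = [:[:1, 0, 2:], [:2, 5, 0, 1:], [:3, 2, 1:], [:4, 2:], [:1:]:]"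
  by (subst hh_rec) (simp_all add: comp_simps)
lemma M2_2_4_6_7[simp]: "hh M2 (4) {2, 4, 6, 7} = [:[:2, 0, 1:], [:2, 6, 1, 1:], [:5, 2, 1:], [:1, 1:], [:1:]:]"
  by (subst hh_rec) (simp_all add: comp_simps)
lemma M2_2_5_6_7[simp]: "hh M2 (4) {2, 5, 6, 7} = [:[:0, 2, 0, 1:], [:2, 1, 3:], [:5, 5:], [:3, 1:], [:1:]:]"
  by (subst hh_rec) (simp_all add: comp_simps)
lemma M2_3_4_5_6[simp]: "hh M2 (4) {3, 4, 5, 6} = [:[:1, 1:], [:3, 5, 3, 1:], [:5, 1:], [:2, 2:]:]"
  by (subst hh_rec) (simp_all add: comp_simps)
lemma M2_3_4_5_7[simp]: "hh M2 (4) {3, 4, 5, 7} = [:[:0, 1, 1:], [:3, 4, 2, 1:], [:3, 1:], [:5, 3:]:]"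
  by (subst hh_rec) (simp_all add: comp_simps)
lemma M2_3_4_6_7[simp]: "hh M2 (4) {3, 4, 6, 7} = [:[:1, 2, 1, 1:], [:4, 2:], [:3, 5, 2:], [:2:], [:1:]:]"
  by (subst hh_rec) (simp_all add: comp_simps)
lemma M2_3_5_6_7[simp]: "hh M2 (4) {3, 5, 6, 7} = [:[:1, 1, 1, 1:], [:1, 2, 1:], [:5, 6, 1:], [:2:], [:2:]:]"
  by (subst hh_rec) (simp_all add: comp_simps)
lemma M2_4_5_6_7[simp]: "hh M2 (4) {4, 5, 6, 7} = [:[:1, 0, 3, 0, 1:], [:2, 4:], [:3, 4, 3:], [:2:], [:1:]:]"
  by (subst hh_rec) (simp_all add: comp_simps)
lemma M2_0_1_2_3_4[simp]: "hh M2 (3) {0, Suc 0, 2, 3, 4} = [:[:2:], [:11, 8:], [:30, 10, 4:], [:24, 14, 2:], [:10, 4:], [:1:]:]"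
  by (subst hh_rec) (simp_all add: comp_simps)
lemma M2_0_1_2_3_5[simp]: "hh M2 (3) {0, Suc 0, 2, 3, 5} = [:0, [:7, 4, 3:], [:22, 16, 2:], [:35, 12, 1:], [:12, 4:], [:2:]:]"
  by (subst hh_rec) (simp_all add: comp_simps)
lemma M2_0_1_2_3_6[simp]: "hh M2 (3) {0, Suc 0, 2, 3, 6} = [:[:0, 2:], [:5, 4, 3:], [:22, 20, 2:], [:31, 8, 1:], [:16, 2:], [:4:]:]"
  by (subst hh_rec) (simp_all add: comp_simps)
lemma M2_0_1_2_3_7[simp]: "hh M2 (3) {0, Suc 0, 2, 3, 7} = [:[:2:], [:4, 6:], [:18, 14, 4:], [:26, 12, 2:], [:22, 4:], [:6:]:]"
  by (subst hh_rec) (simp_all add: comp_simps)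
lemma M2_0_1_2_4_5[simp]: "hh M2 (3) {0, Suc 0, 2, 4, 5} = [:[:0, 2:], [:12, 5, 2:], [:27, 13, 4:], [:27, 13:], [:11, 3:], [:1:]:]"
  by (subst hh_rec) (simp_all add: comp_simps)
lemma M2_0_1_2_4_6[simp]: "hh M2 (3) {0, Suc 0, 2, 4, 6} = [:[:0, 2:], [:12, 5, 2:], [:31, 13, 4:], [:21, 13:], [:11, 3:], [:3:]:]"
  by (subst hh_rec) (simp_all add: comp_simps)
lemma M2_0_1_2_4_7[simp]: "hh M2 (3) {0, Suc 0, 2, 4, 7} = [:[:2:], [:7, 8:], [:22, 14, 4:], [:26, 12, 2:], [:16, 2:], [:5:]:]"
  by (subst hh_rec) (simp_all add: comp_simps)
lemma M2_0_1_2_5_6[simp]: "hh M2 (3) {0, Suc 0, 2, 5, 6} = [:[:0, 0, 2:], [:0, 10, 2:], [:24, 18, 2:], [:34, 6:], [:16, 2:], [:4:]:]"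
  by (subst hh_rec) (simp_all add: comp_simps)
lemma M2_0_1_2_5_7[simp]: "hh M2 (3) {0, Suc 0, 2, 5, 7} = [:[:0, 2:], [:5, 2, 3:], [:16, 18, 2:], [:27, 12, 1:], [:24, 2:], [:6:]:]"
  by (subst hh_rec) (simp_all add: comp_simps)
lemma M2_0_1_2_6_7[simp]: "hh M2 (3) {0, Suc 0, 2, 6, 7} = [:0, [:7, 2, 3:], [:16, 14, 2:], [:31, 16, 1:], [:20, 4:], [:4:]:]"
  by (subst hh_rec) (simp_all add: comp_simps)
lemma M2_0_1_3_4_5[simp]: "hh M2 (3) {0, Suc 0, 3, 4, 5} = [:[:1, 0, 1:], [:8, 9, 0, 1:], [:22, 13, 6, 1:], [:25, 16, 5:], [:8, 4:]:]"
  by (subst hh_rec) (simp_all add: comp_simps)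
lemma M2_0_1_3_4_6[simp]: "hh M2 (3) {0, Suc 0, 3, 4, 6} = [:[:1, 1, 1:], [:8, 11, 2, 1:], [:22, 11, 6, 1:], [:19, 14, 3:], [:12, 5:], [:2:]:]"
  by (subst hh_rec) (simp_all add: comp_simps)
lemma M2_0_1_3_4_7[simp]: "hh M2 (3) {0, Suc 0, 3, 4, 7} = [:[:1, 2:], [:6, 7, 4:], [:15, 13, 6, 2:], [:21, 13, 2:], [:18, 7:], [:3:]:]"
  by (subst hh_rec) (simp_all add: comp_simps)
lemma M2_0_1_3_5_6[simp]: "hh M2 (3) {0, Suc 0, 3, 5, 6} = [:[:0, 1, 0, 1:], [:4, 6, 6:], [:16, 17, 4, 1:], [:24, 14, 2:], [:16, 4:], [:4:]:]"
  by (subst hh_rec) (simp_all add: comp_simps)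
lemma M2_0_1_3_5_7[simp]: "hh M2 (3) {0, Suc 0, 3, 5, 7} = [:[:1, 0, 1:], [:4, 7, 2, 1:], [:10, 13, 6, 1:], [:23, 14, 3:], [:20, 8:], [:6:]:]"
  by (subst hh_rec) (simp_all add: comp_simps)
lemma M2_0_1_3_6_7[simp]: "hh M2 (3) {0, Suc 0, 3, 6, 7} = [:[:1, 0, 1:], [:4, 5, 2, 1:], [:12, 15, 6, 1:], [:21, 16, 3:], [:18, 6:], [:8:]:]"
  by (subst hh_rec) (simp_all add: comp_simps)
lemma M2_0_1_4_5_6[simp]: "hh M2 (3) {0, Suc 0, 4, 5, 6} = [:[:0, 2, 1:], [:8, 9, 3, 2:], [:22, 13, 5:], [:20, 13, 3:], [:12, 5:], [:2:]:]"
  by (subst hh_rec) (simp_all add: comp_simps)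
lemma M2_0_1_4_5_7[simp]: "hh M2 (3) {0, Suc 0, 4, 5, 7} = [:[:1, 1, 1:], [:5, 8, 3, 1:], [:15, 14, 6, 1:], [:21, 13, 2:], [:19, 6:], [:3:]:]"
  by (subst hh_rec) (simp_all add: comp_simps)
lemma M2_0_1_4_6_7[simp]: "hh M2 (3) {0, Suc 0, 4, 6, 7} = [:[:1, 0, 1:], [:7, 6, 1, 1:], [:17, 16, 6, 1:], [:21, 15, 4:], [:13, 5:], [:5:]:]"
  by (subst hh_rec) (simp_all add: comp_simps)
lemma M2_0_1_5_6_7[simp]: "hh M2 (3) {0, Suc 0, 5, 6, 7} = [:[:0, 1, 0, 1:], [:4, 4, 4:], [:12, 15, 6, 1:], [:22, 16, 2:], [:18, 6:], [:8:]:]"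
  by (subst hh_rec) (simp_all add: comp_simps)
lemma M2_0_2_3_4_5[simp]: "hh M2 (3) {0, 2, 3, 4, 5} = [:[:1, 0, 1:], [:9, 9, 1, 1:], [:28, 19, 6, 1:], [:24, 12, 4:], [:2, 2:]:]"
  by (subst hh_rec) (simp_all add: comp_simps)
lemma M2_0_2_3_4_6[simp]: "hh M2 (3) {0, 2, 3, 4, 6} = [:[:1, 1, 1:], [:10, 14, 3, 1:], [:23, 12, 6, 1:], [:23, 11, 2:], [:7, 4:]:]"
  by (subst hh_rec) (simp_all add: comp_simps)
lemma M2_0_2_3_4_7[simp]: "hh M2 (3) {0, 2, 3, 4, 7} = [:[:1, 2:], [:7, 10, 6:], [:18, 14, 4, 2:], [:24, 10, 2:], [:13, 6:], [:1:]:]"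
  by (subst hh_rec) (simp_all add: comp_simps)
lemma M2_0_2_3_5_6[simp]: "hh M2 (3) {0, 2, 3, 5, 6} = [:[:0, 1, 0, 1:], [:5, 7, 7, 1:], [:17, 20, 5:], [:26, 14:], [:16:]:]"
  by (subst hh_rec) (simp_all add: comp_simps)
lemma M2_0_2_3_5_7[simp]: "hh M2 (3) {0, 2, 3, 5, 7} = [:[:1, 0, 1:], [:5, 8, 3, 2:], [:11, 16, 7:], [:25, 14, 1:], [:20, 4:], [:2:]:]"
  by (subst hh_rec) (simp_all add: comp_simps)
lemma M2_0_2_3_6_7[simp]: "hh M2 (3) {0, 2, 3, 6, 7} = [:[:1, 0, 1:], [:5, 6, 3, 2:], [:13, 18, 7:], [:23, 16, 1:], [:18, 2:], [:4:]:]"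
  by (subst hh_rec) (simp_all add: comp_simps)
lemma M2_0_2_4_5_6[simp]: "hh M2 (3) {0, 2, 4, 5, 6} = [:[:0, 2, 1:], [:10, 12, 4, 2:], [:23, 14, 5:], [:24, 10, 2:], [:7, 4:]:]"
  by (subst hh_rec) (simp_all add: comp_simps)
lemma M2_0_2_4_5_7[simp]: "hh M2 (3) {0, 2, 4, 5, 7} = [:[:1, 1, 1:], [:6, 11, 5, 1:], [:18, 15, 4, 1:], [:24, 10, 2:], [:14, 5:], [:1:]:]"
  by (subst hh_rec) (simp_all add: comp_simps)
lemma M2_0_2_4_6_7[simp]: "hh M2 (3) {0, 2, 4, 6, 7} = [:[:1, 0, 1:], [:9, 6, 3, 1:], [:21, 22, 4, 1:], [:19, 11, 4:], [:11, 3:], [:3:]:]"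
  by (subst hh_rec) (simp_all add: comp_simps)
lemma M2_0_2_5_6_7[simp]: "hh M2 (3) {0, 2, 5, 6, 7} = [:[:0, 1, 0, 1:], [:5, 5, 5, 1:], [:13, 18, 7:], [:24, 16:], [:18, 2:], [:4:]:]"
  by (subst hh_rec) (simp_all add: comp_simps)
lemma M2_0_3_4_5_6[simp]: "hh M2 (3) {0, 3, 4, 5, 6} = [:[:1, 0, 1:], [:7, 12, 6, 2, 1:], [:15, 18, 7, 2:], [:26, 10, 4:], [:4, 4:]:]"
  by (subst hh_rec) (simp_all add: comp_simps)
lemma M2_0_3_4_5_7[simp]: "hh M2 (3) {0, 3, 4, 5, 7} = [:[:0, 1, 0, 1:], [:5, 11, 8, 1, 1:], [:11, 12, 5, 2:], [:27, 14, 5:], [:10, 6:]:]"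
  by (subst hh_rec) (simp_all add: comp_simps)
lemma M2_0_3_4_6_7[simp]: "hh M2 (3) {0, 3, 4, 6, 7} = [:[:1, 1, 1, 1:], [:4, 6, 6, 1, 1:], [:17, 21, 6, 2:], [:16, 11, 5:], [:13, 5:], [:2:]:]"
  by (subst hh_rec) (simp_all add: comp_simps)
lemma M2_0_3_5_6_7[simp]: "hh M2 (3) {0, 3, 5, 6, 7} = [:[:1, 0, 2, 0, 1:], [:3, 3, 3, 3:], [:11, 21, 11, 1:], [:14, 16, 2:], [:20, 4:], [:4:]:]"
  by (subst hh_rec) (simp_all add: comp_simps)
lemma M2_0_4_5_6_7[simp]: "hh M2 (3) {0, 4, 5, 6, 7} = [:[:1, 1, 1, 1:], [:4, 6, 6, 1, 1:], [:17, 21, 6, 2:], [:16, 11, 5:], [:13, 5:], [:2:]:]"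
  by (subst hh_rec) (simp_all add: comp_simps)
lemma M2_1_2_3_4_5[simp]: "hh M2 (3) {Suc 0, 2, 3, 4, 5} = [:[:3, 2, 1:], [:14, 13, 3, 2:], [:24, 13, 5:], [:20, 13, 3:], [:3, 1:]:]"
  by (subst hh_rec) (simp_all add: comp_simps)
lemma M2_1_2_3_4_6[simp]: "hh M2 (3) {Suc 0, 2, 3, 4, 6} = [:[:3, 3, 3:], [:14, 14, 1, 2:], [:23, 14, 7:], [:15, 8, 1:], [:8, 3:], [:1:]:]"
  by (subst hh_rec) (simp_all add: comp_simps)
lemma M2_1_2_3_4_7[simp]: "hh M2 (3) {Suc 0, 2, 3, 4, 7} = [:[:3, 4:], [:10, 9, 6:], [:19, 17, 6, 2:], [:19, 7:], [:12, 5:], [:1:]:]"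
  by (subst hh_rec) (simp_all add: comp_simps)
lemma M2_1_2_3_5_6[simp]: "hh M2 (3) {Suc 0, 2, 3, 5, 6} = [:[:0, 3, 2, 1:], [:8, 9, 6, 1:], [:23, 20, 3:], [:21, 8, 1:], [:10, 2:], [:2:]:]"
  by (subst hh_rec) (simp_all add: comp_simps)
lemma M2_1_2_3_5_7[simp]: "hh M2 (3) {Suc 0, 2, 3, 5, 7} = [:[:3, 2, 1:], [:4, 7, 4, 1:], [:20, 19, 6, 1:], [:19, 10, 1:], [:16, 4:], [:2:]:]"
  by (subst hh_rec) (simp_all add: comp_simps)
lemma M2_1_2_3_6_7[simp]: "hh M2 (3) {Suc 0, 2, 3, 6, 7} = [:[:3, 0, 1:], [:6, 11, 4, 1:], [:16, 15, 6, 1:], [:23, 14, 1:], [:12, 2:], [:4:]:]"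
  by (subst hh_rec) (simp_all add: comp_simps)
lemma M2_1_2_4_5_6[simp]: "hh M2 (3) {Suc 0, 2, 4, 5, 6} = [:[:0, 6, 1, 2:], [:16, 9, 6:], [:22, 17, 5:], [:17, 7:], [:8, 3:], [:1:]:]"
  by (subst hh_rec) (simp_all add: comp_simps)
lemma M2_1_2_4_5_7[simp]: "hh M2 (3) {Suc 0, 2, 4, 5, 7} = [:[:3, 1, 3:], [:7, 14, 2, 2:], [:21, 16, 7:], [:18, 8:], [:14, 3:], [:1:]:]"
  by (subst hh_rec) (simp_all add: comp_simps)
lemma M2_1_2_4_6_7[simp]: "hh M2 (3) {Suc 0, 2, 4, 6, 7} = [:[:3, 0, 1:], [:9, 13, 4, 2:], [:24, 15, 5:], [:17, 13, 2:], [:7, 1:], [:4:]:]"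
  by (subst hh_rec) (simp_all add: comp_simps)
lemma M2_1_2_5_6_7[simp]: "hh M2 (3) {Suc 0, 2, 5, 6, 7} = [:[:0, 3, 0, 1:], [:8, 5, 8, 1:], [:15, 20, 3:], [:25, 12, 1:], [:12, 2:], [:4:]:]"
  by (subst hh_rec) (simp_all add: comp_simps)
lemma M2_1_3_4_5_6[simp]: "hh M2 (3) {Suc 0, 3, 4, 5, 6} = [:[:2, 3, 4, 0, 1:], [:11, 13, 4, 2:], [:17, 15, 8, 2:], [:15, 9, 2:], [:8, 4:]:]"
  by (subst hh_rec) (simp_all add: comp_simps)
lemma M2_1_3_4_5_7[simp]: "hh M2 (3) {Suc 0, 3, 4, 5, 7} = [:[:2, 4, 1, 1:], [:6, 10, 7, 2, 1:], [:15, 13, 7, 1:], [:19, 12, 3:], [:11, 5:]:]"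
  by (subst hh_rec) (simp_all add: comp_simps)
lemma M2_1_3_4_6_7[simp]: "hh M2 (3) {Suc 0, 3, 4, 6, 7} = [:[:2, 3, 1, 1:], [:9, 9, 8, 2, 1:], [:14, 16, 5, 1:], [:15, 13, 4:], [:10, 3:], [:3:]:]"
  by (subst hh_rec) (simp_all add: comp_simps)
lemma M2_1_3_5_6_7[simp]: "hh M2 (3) {Suc 0, 3, 5, 6, 7} = [:[:2, 1, 2, 1:], [:5, 9, 6, 3, 1:], [:11, 14, 5:], [:19, 18, 5:], [:10, 2:], [:6:]:]"
  by (subst hh_rec) (simp_all add: comp_simps)
lemma M2_1_4_5_6_7[simp]: "hh M2 (3) {Suc 0, 4, 5, 6, 7} = [:[:2, 1, 3, 0, 1:], [:7, 13, 6, 3:], [:16, 13, 6, 1:], [:15, 14, 3:], [:10, 3:], [:3:]:]"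
  by (subst hh_rec) (simp_all add: comp_simps)
lemma M2_2_3_4_5_6[simp]: "hh M2 (3) {2, 3, 4, 5, 6} = [:[:3, 3, 5, 0, 1:], [:12, 18, 5, 3:], [:17, 12, 6, 1:], [:19, 9, 2:], [:2, 2:]:]"
  by (subst hh_rec) (simp_all add: comp_simps)
lemma M2_2_3_4_5_7[simp]: "hh M2 (3) {2, 3, 4, 5, 7} = [:[:2, 5, 1, 2:], [:9, 13, 10, 1, 1:], [:14, 11, 4, 1:], [:23, 12, 3:], [:5, 3:]:]"
  by (subst hh_rec) (simp_all add: comp_simps)
lemma M2_2_3_4_6_7[simp]: "hh M2 (3) {2, 3, 4, 6, 7} = [:[:3, 4, 2, 2:], [:9, 10, 8, 1, 1:], [:18, 20, 5, 1:], [:12, 7, 3:], [:10, 3:], [:1:]:]"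
  by (subst hh_rec) (simp_all add: comp_simps)
lemma M2_2_3_5_6_7[simp]: "hh M2 (3) {2, 3, 5, 6, 7} = [:[:3, 1, 4, 1, 1:], [:4, 9, 4, 3:], [:15, 22, 9:], [:15, 10, 1:], [:14, 2:], [:2:]:]"
  by (subst hh_rec) (simp_all add: comp_simps)
lemma M2_2_4_5_6_7[simp]: "hh M2 (3) {2, 4, 5, 6, 7} = [:[:3, 2, 4, 1, 1:], [:7, 14, 6, 2:], [:20, 17, 6, 1:], [:12, 8, 2:], [:10, 3:], [:1:]:]"
  by (subst hh_rec) (simp_all add: comp_simps)
lemma M2_3_4_5_6_7[simp]: "hh M2 (3) {3, 4, 5, 6, 7} = [:[:2, 4, 2, 5, 0, 1:], [:6, 8, 6:], [:14, 23, 12, 5:], [:12, 4:], [:10, 6:]:]"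
  by (subst hh_rec) (simp_all add: comp_simps)
lemma M2_0_1_2_3_4_5[simp]: "hh M2 (2) {0, Suc 0, 2, 3, 4, 5} = [:[:4, 5, 2, 1:], [:44, 39, 18, 3, 1:], [:112, 91, 30, 7, 1:], [:136, 85, 28, 5:], [:52, 32, 6:], [:13, 4:], [:1:]:]"
  by (subst hh_rec) (simp_all add: comp_simps)
lemma M2_0_1_2_3_4_6[simp]: "hh M2 (2) {0, Suc 0, 2, 3, 4, 6} = [:[:4, 9, 5, 1:], [:43, 45, 20, 5, 1:], [:110, 89, 30, 7, 1:], [:120, 69, 22, 3:], [:66, 38, 7:], [:18, 6:], [:1:]:]"
  by (subst hh_rec) (simp_all add: comp_simps)
lemma M2_0_1_2_3_4_7[simp]: "hh M2 (2) {0, Suc 0, 2, 3, 4, 7} = [:[:10, 7, 2:], [:39, 47, 19, 4:], [:107, 84, 35, 10, 2:], [:119, 76, 21, 2:], [:73, 39, 7:], [:14, 3:]:]"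
  by (subst hh_rec) (simp_all add: comp_simps)
lemma M2_0_1_2_3_5_6[simp]: "hh M2 (2) {0, Suc 0, 2, 3, 5, 6} = [:[:0, 4, 5, 2, 1:], [:13, 32, 21, 8:], [:76, 82, 33, 4, 1:], [:125, 88, 19, 2:], [:108, 40, 6:], [:34, 10:], [:6:]:]"
  by (subst hh_rec) (simp_all add: comp_simps)
lemma M2_0_1_2_3_5_7[simp]: "hh M2 (2) {0, Suc 0, 2, 3, 5, 7} = [:[:4, 5, 2, 1:], [:23, 25, 20, 5, 1:], [:73, 85, 30, 7, 1:], [:124, 85, 22, 3:], [:98, 46, 10:], [:34, 10:], [:6:]:]"
  by (subst hh_rec) (simp_all add: comp_simps)
lemma M2_0_1_2_3_6_7[simp]: "hh M2 (2) {0, Suc 0, 2, 3, 6, 7} = [:[:4, 3, 2, 1:], [:25, 27, 18, 5, 1:], [:71, 85, 32, 7, 1:], [:126, 89, 24, 3:], [:92, 40, 8:], [:38, 12:], [:6:]:]"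
  by (subst hh_rec) (simp_all add: comp_simps)
lemma M2_0_1_2_4_5_6[simp]: "hh M2 (2) {0, Suc 0, 2, 4, 5, 6} = [:[:0, 8, 6, 3:], [:26, 43, 21, 5, 2:], [:93, 81, 29, 5:], [:133, 69, 23, 3:], [:79, 47, 5:], [:27, 8:], [:4:]:]"
  by (subst hh_rec) (simp_all add: comp_simps)
lemma M2_0_1_2_4_5_7[simp]: "hh M2 (2) {0, Suc 0, 2, 4, 5, 7} = [:[:4, 7, 5, 1:], [:32, 37, 20, 6, 1:], [:89, 85, 31, 7, 1:], [:118, 78, 20, 2:], [:89, 44, 8:], [:25, 5:], [:5:]:]"
  by (subst hh_rec) (simp_all add: comp_simps)
lemma M2_0_1_2_4_6_7[simp]: "hh M2 (2) {0, Suc 0, 2, 4, 6, 7} = [:[:4, 3, 2, 1:], [:39, 33, 18, 4, 1:], [:99, 89, 31, 7, 1:], [:110, 88, 26, 4:], [:75, 36, 7:], [:30, 7:], [:5:]:]"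
  by (subst hh_rec) (simp_all add: comp_simps)
lemma M2_0_1_2_5_6_7[simp]: "hh M2 (2) {0, Suc 0, 2, 5, 6, 7} = [:[:0, 4, 3, 2, 1:], [:13, 26, 19, 6:], [:64, 72, 33, 6, 1:], [:115, 88, 21, 2:], [:104, 52, 8:], [:56, 14:], [:10:]:]"
  by (subst hh_rec) (simp_all add: comp_simps)
lemma M2_0_1_3_4_5_6[simp]: "hh M2 (2) {0, Suc 0, 3, 4, 5, 6} = [:[:3, 6, 6, 1, 1:], [:32, 41, 21, 6, 1:], [:86, 83, 26, 7:], [:129, 70, 23, 2:], [:84, 47, 8:], [:26, 9:], [:2:]:]"
  by (subst hh_rec) (simp_all add: comp_simps)
lemma M2_0_1_3_4_5_7[simp]: "hh M2 (2) {0, Suc 0, 3, 4, 5, 7} = [:[:5, 6, 4, 2:], [:29, 47, 20, 6, 2:], [:79, 72, 34, 6:], [:130, 82, 24, 2:], [:89, 42, 2:], [:27, 7:], [:3:]:]"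
  by (subst hh_rec) (simp_all add: comp_simps)
lemma M2_0_1_3_4_6_7[simp]: "hh M2 (2) {0, Suc 0, 3, 4, 6, 7} = [:[:6, 5, 5, 2:], [:33, 39, 19, 6, 2:], [:88, 86, 33, 6:], [:107, 82, 25, 2:], [:87, 37, 2:], [:38, 7:], [:3:]:]"
  by (subst hh_rec) (simp_all add: comp_simps)
lemma M2_0_1_3_5_6_7[simp]: "hh M2 (2) {0, Suc 0, 3, 5, 6, 7} = [:[:3, 3, 4, 3, 1:], [:18, 22, 21, 6, 1:], [:58, 79, 30, 5:], [:101, 92, 23, 2:], [:108, 46, 6:], [:60, 14:], [:14:]:]"
  by (subst hh_rec) (simp_all add: comp_simps)
lemma M2_0_1_4_5_6_7[simp]: "hh M2 (2) {0, Suc 0, 4, 5, 6, 7} = [:[:3, 5, 5, 2, 1:], [:25, 33, 21, 6, 1:], [:79, 76, 27, 6:], [:105, 84, 25, 2:], [:95, 47, 6:], [:47, 11:], [:8:]:]"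
  by (subst hh_rec) (simp_all add: comp_simps)
lemma M2_0_2_3_4_5_6[simp]: "hh M2 (2) {0, 2, 3, 4, 5, 6} = [:[:3, 7, 6, 2, 1:], [:29, 45, 30, 12, 2, 1:], [:76, 84, 38, 10, 2:], [:120, 90, 26, 6:], [:72, 33, 10:], [:9, 6:]:]"
  by (subst hh_rec) (simp_all add: comp_simps)
lemma M2_0_2_3_4_5_7[simp]: "hh M2 (2) {0, 2, 3, 4, 5, 7} = [:[:5, 6, 5, 2, 1:], [:30, 48, 30, 13, 2, 1:], [:78, 82, 39, 8, 2:], [:114, 89, 28, 7:], [:65, 34, 8:], [:16, 6:], [:1:]:]"
  by (subst hh_rec) (simp_all add: comp_simps)
lemma M2_0_2_3_4_6_7[simp]: "hh M2 (2) {0, 2, 3, 4, 6, 7} = [:[:6, 6, 6, 3, 1:], [:34, 42, 23, 11, 2, 1:], [:82, 99, 49, 9, 2:], [:95, 75, 25, 7:], [:70, 35, 7:], [:21, 8:], [:1:]:]"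
  by (subst hh_rec) (simp_all add: comp_simps)
lemma M2_0_2_3_5_6_7[simp]: "hh M2 (2) {0, 2, 3, 5, 6, 7} = [:[:3, 4, 4, 5, 1, 1:], [:16, 24, 21, 8, 3:], [:55, 85, 48, 15, 1:], [:89, 88, 31, 2:], [:96, 54, 6:], [:44, 10:], [:6:]:]"
  by (subst hh_rec) (simp_all add: comp_simps)
lemma M2_0_2_4_5_6_7[simp]: "hh M2 (2) {0, 2, 4, 5, 6, 7} = [:[:3, 6, 6, 3, 2:], [:24, 36, 23, 11, 1, 1:], [:71, 83, 47, 9, 2:], [:99, 87, 23, 7:], [:78, 43, 11:], [:30, 10:], [:4:]:]"
  by (subst hh_rec) (simp_all add: comp_simps)
lemma M2_0_3_4_5_6_7[simp]: "hh M2 (2) {0, 3, 4, 5, 6, 7} = [:[:5, 5, 6, 6, 1, 1:], [:21, 31, 22, 8, 2:], [:66, 100, 50, 12, 2:], [:96, 74, 22, 4:], [:90, 44, 10:], [:29, 11:], [:2:]:]"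
  by (subst hh_rec) (simp_all add: comp_simps)
lemma M2_1_2_3_4_5_6[simp]: "hh M2 (2) {Suc 0, 2, 3, 4, 5, 6} = [:[:3, 14, 11, 7, 1, 1:], [:42, 52, 34, 8, 2:], [:90, 93, 33, 13, 2:], [:104, 66, 24, 2:], [:55, 36, 8:], [:14, 4:], [:1:]:]"
  by (subst hh_rec) (simp_all add: comp_simps)
lemma M2_1_2_3_4_5_7[simp]: "hh M2 (2) {Suc 0, 2, 3, 4, 5, 7} = [:[:11, 12, 10, 3, 1:], [:37, 57, 29, 13, 3, 1:], [:89, 83, 41, 9, 1:], [:99, 79, 25, 5:], [:57, 29, 5:], [:15, 5:], [:1:]:]"
  by (subst hh_rec) (simp_all add: comp_simps)
lemma M2_1_2_3_4_6_7[simp]: "hh M2 (2) {Suc 0, 2, 3, 4, 6, 7} = [:[:12, 9, 10, 3, 1:], [:41, 61, 26, 14, 3, 1:], [:91, 87, 45, 7, 1:], [:86, 74, 26, 6:], [:56, 26, 3:], [:22, 8:], [:1:]:]"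
  by (subst hh_rec) (simp_all add: comp_simps)
lemma M2_1_2_3_5_6_7[simp]: "hh M2 (2) {Suc 0, 2, 3, 5, 6, 7} = [:[:3, 9, 7, 5, 2:], [:26, 30, 29, 11, 3, 1:], [:63, 91, 37, 7:], [:97, 83, 33, 7:], [:78, 40, 4:], [:36, 12:], [:6:]:]"
  by (subst hh_rec) (simp_all add: comp_simps)
lemma M2_1_2_4_5_6_7[simp]: "hh M2 (2) {Suc 0, 2, 4, 5, 6, 7} = [:[:3, 13, 6, 7, 1, 1:], [:37, 36, 37, 9, 3:], [:73, 97, 33, 11, 1:], [:99, 73, 29, 3:], [:65, 39, 5:], [:27, 7:], [:5:]:]"
  by (subst hh_rec) (simp_all add: comp_simps)
lemma M2_1_3_4_5_6_7[simp]: "hh M2 (2) {Suc 0, 3, 4, 5, 6, 7} = [:[:8, 9, 11, 6, 2, 1:], [:33, 50, 24, 10, 1:], [:73, 84, 46, 12, 2:], [:90, 74, 22, 2:], [:72, 40, 7:], [:30, 8:], [:3:]:]"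
  by (subst hh_rec) (simp_all add: comp_simps)
lemma M2_2_3_4_5_6_7[simp]: "hh M2 (2) {2, 3, 4, 5, 6, 7} = [:[:9, 8, 17, 4, 8, 0, 1:], [:28, 56, 26, 18:], [:70, 88, 62, 16, 7:], [:78, 70, 18, 2:], [:61, 36, 12:], [:18, 6:], [:1:]:]"
  by (subst hh_rec) (simp_all add: comp_simps)
lemma M2_0_1_2_3_4_5_6[simp]: "hh M2 (Suc 0) {0, Suc 0, 2, 3, 4, 5, 6} = [:[:6, 31, 30, 17, 4, 2:], [:108, 183, 133, 53, 18, 2, 1:], [:369, 449, 231, 79, 14, 2:], [:664, 587, 253, 51, 9:], [:599, 444, 123, 20:], [:293, 140, 25:], [:72, 20:], [:8:]:]"
  by (subst hh_rec) (simp_all add: comp_simps)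
lemma M2_0_1_2_3_4_5_7[simp]: "hh M2 (Suc 0) {0, Suc 0, 2, 3, 4, 5, 7} = [:[:24, 35, 27, 12, 3, 1:], [:156, 222, 139, 59, 20, 3, 1:], [:431, 481, 257, 77, 12, 2:], [:663, 607, 251, 59, 10:], [:530, 373, 98, 13:], [:251, 122, 23:], [:58, 14:], [:6:]:]"
  by (subst hh_rec) (simp_all add: comp_simps)
lemma M2_0_1_2_3_4_6_7[simp]: "hh M2 (Suc 0) {0, Suc 0, 2, 3, 4, 6, 7} = [:[:26, 32, 28, 13, 4, 1:], [:170, 222, 129, 53, 18, 3, 1:], [:452, 507, 275, 85, 13, 2:], [:601, 577, 241, 57, 10:], [:529, 372, 99, 12:], [:273, 128, 23:], [:62, 16:], [:6:]:]"
  by (subst hh_rec) (simp_all add: comp_simps)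
lemma M2_0_1_2_3_5_6_7[simp]: "hh M2 (Suc 0) {0, Suc 0, 2, 3, 5, 6, 7} = [:[:6, 23, 23, 16, 10, 1, 1:], [:78, 134, 118, 54, 12, 4:], [:309, 431, 256, 80, 19, 1:], [:582, 610, 246, 58, 4:], [:648, 448, 124, 12:], [:376, 180, 28:], [:108, 28:], [:12:]:]"
  by (subst hh_rec) (simp_all add: comp_simps)
lemma M2_0_1_2_4_5_6_7[simp]: "hh M2 (Suc 0) {0, Suc 0, 2, 4, 5, 6, 7} = [:[:6, 29, 23, 18, 5, 3:], [:96, 150, 125, 47, 18, 1, 1:], [:329, 421, 229, 85, 12, 2:], [:589, 571, 259, 51, 10:], [:582, 465, 126, 19:], [:369, 188, 33:], [:128, 30:], [:20:]:]"
  by (subst hh_rec) (simp_all add: comp_simps)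
lemma M2_0_1_3_4_5_6_7[simp]: "hh M2 (Suc 0) {0, Suc 0, 3, 4, 5, 6, 7} = [:[:14, 25, 27, 15, 10, 2, 1:], [:104, 159, 110, 51, 12, 2:], [:318, 417, 259, 93, 19, 2:], [:549, 561, 241, 45, 4:], [:589, 480, 137, 16:], [:387, 182, 21:], [:138, 30:], [:20:]:]"
  by (subst hh_rec) (simp_all add: comp_simps)
lemma M2_0_2_3_4_5_6_7[simp]: "hh M2 (Suc 0) {0, 2, 3, 4, 5, 6, 7} = [:[:20, 26, 35, 15, 12, 1, 1:], [:116, 184, 116, 59, 8, 3:], [:363, 469, 271, 79, 20, 2:], [:608, 587, 225, 51, 5:], [:599, 408, 127, 16:], [:317, 156, 21:], [:88, 24:], [:8:]:]"
  by (subst hh_rec) (simp_all add: comp_simps)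
lemma M2_1_2_3_4_5_6_7[simp]: "hh M2 (Suc 0) {Suc 0, 2, 3, 4, 5, 6, 7} = [:[:14, 45, 36, 37, 8, 11, 0, 1:], [:138, 196, 178, 64, 28:], [:340, 492, 284, 136, 30, 10:], [:536, 552, 268, 48, 4:], [:474, 412, 140, 30:], [:262, 132, 18:], [:82, 26:], [:8:]:]"
  by (subst hh_rec) (simp_all add: comp_simps)
lemma M2_0_1_2_3_4_5_6_7[simp]: "hh M2 (0) {0, Suc 0, 2, 3, 4, 5, 6, 7} = [:[:40, 88, 130, 82, 69, 12, 14, 0, 1:], [:360, 742, 648, 402, 112, 44:], [:1520, 2434, 1804, 748, 268, 44, 14:], [:3320, 4152, 2256, 748, 112, 12:], [:4353, 4152, 1804, 402, 69:], [:3320, 2434, 648, 82:], [:1520, 742, 130:], [:360, 88:], [:40:]:]"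
  by (subst hh_rec) (simp_all add: comp_simps)


definition deg :: "(nat \<Rightarrow> nat \<Rightarrow> bool) \<Rightarrow> nat \<Rightarrow> nat" where
  "deg E i = (\<Sum>j<8. if E i j then 1 else 0)"

lemma lt8: "{..<8::nat} = {0, Suc 0, 2, 3, 4, 5, 6, 7}"
  by (auto simp: numeral_eq_Suc less_Suc_eq)

lemma all8: "(\<forall>i<8::nat. P i) \<longleftrightarrow> P 0 \<and> P 1 \<and> P 2 \<and> P 3 \<and> P 4 \<and> P 5 \<and> P 6 \<and> P 7"
proof -
  have "(\<forall>i<8::nat. P i) \<longleftrightarrow> (\<forall>i\<in>{..<8}. P i)" by (metis lessThan_iff)
  then show ?thesis unfolding lt8 by simp
qed

lemma deg_iso:
  assumes f: "bij_betw f {..<8} {..<8}" and e: "\<forall>i<8. \<forall>j<8. E1 i j \<longleftrightarrow> E2 (f i) (f j)"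
    and i: "i < 8"
  shows "deg E1 i = deg E2 (f i)"
proof -
  have "deg E2 (f i) = (\<Sum>j<8. if E2 (f i) (f j) then 1 else 0)"
    unfolding deg_def by (rule sum.reindex_bij_betw[OF f, symmetric])
  also have "\<dots> = deg E1 i" unfolding deg_def using e i by (intro sum.cong) auto
  finally show ?thesis by simp
qed

lemma deg2: "\<forall>v<8. E2 2 v \<longrightarrow> deg E2 v = 5"
  unfolding all8 by (simp add: deg_def lt8 E2_def)

lemma degs1: "deg E1 0 = 4" "deg E1 (Suc 0) = 3" "deg E1 2 = 3" "deg E1 3 = 2"
  "deg E1 4 = 2" "deg E1 5 = 4" "deg E1 6 = 5" "deg E1 7 = 5"
  by (simp_all add: deg_def lt8 E1_def)

lemma deg1: "\<forall>u<8. deg E1 u = 2 \<longrightarrow> (\<exists>w<8. E1 u w \<and> deg E1 w \<noteq> 5)"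
proof -
  have a: "\<exists>w<8. E1 3 w \<and> deg E1 w \<noteq> 5" by (rule exI[of _ 0]) (simp add: E1_def degs1)
  have b: "\<exists>w<8. E1 4 w \<and> deg E1 w \<noteq> 5" by (rule exI[of _ 1]) (simp add: E1_def degs1)
  show ?thesis unfolding all8 using a b by (simp add: degs1)
qed

lemma deg22: "deg E2 2 = 2"
  by (simp add: deg_def lt8 E2_def)

lemma noniso: "\<not> graph_iso 8 E1 E2"
proof
  assume "graph_iso 8 E1 E2"
  then obtain f where f: "bij_betw f {..<8} {..<8}" and e: "\<forall>i<8. \<forall>j<8. E1 i j \<longleftrightarrow> E2 (f i) (f j)"
    unfolding graph_iso_def by blast
  have "(2::nat) \<in> f ` {..<8}" using f by (simp add: bij_betw_def)
  then obtain u where u: "u < 8" "f u = 2" by auto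
  have du: "deg E1 u = 2" using deg_iso[OF f e u(1)] u deg22 by simp
  obtain w where w: "w < 8" "E1 u w" "deg E1 w \<noteq> 5" using deg1 u(1) du by blast
  have fw: "f w < 8" using f w(1) by (auto simp: bij_betw_def)
  have "E2 2 (f w)" using e u w by metis
  then have "deg E2 (f w) = 5" using deg2 fw by blast
  then show False using deg_iso[OF f e w(1)] w(3) by simp
qed

lemma sg1: "simple_graph 8 E1"
  unfolding simple_graph_def E1_def by auto

lemma sg2: "simple_graph 8 E2"
  unfolding simple_graph_def E2_def by auto

lemma peq: "perm_poly 8 E1 = perm_poly 8 E2"
proof -
  have a: "perm_poly 8 E1 = hh M1 0 {..<8}" unfolding perm_poly_def per_hh M1_def ..
  have b: "perm_poly 8 E2 = hh M2 0 {..<8}" unfolding perm_poly_def per_hh M2_def ..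
  have c: "hh M1 0 {..<8} = hh M2 0 {..<8}"
    unfolding lt8 M1_0_1_2_3_4_5_6_7 M2_0_1_2_3_4_5_6_7 by (rule refl)
  show ?thesis unfolding a b c by (rule refl)
qed

theorem mainTheorem1:
  shows "\<exists>E1 E2. simple_graph 8 E1 \<and> simple_graph 8 E2 \<and> \<not> graph_iso 8 E1 E2
                 \<and> perm_poly 8 E1 = perm_poly 8 E2"
  using sg1 sg2 noniso peq by blast

end
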